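(* Let $\alpha\ge1$, $S_0>0$, and let $\tilde u_0:[0,S_0]\to[0,\infty)$ be continuous and non-decreasing with $\tilde u_0(S_0)>0$. Let $u_0=\tilde u_0$ on $[0,S_0)$ and $u_0=0$ on $(S_0,\infty)$, $m_0(\rho)=\int_0^\rho u_0$, $M=m_0(S_0)$. Let $P_t(\rho_0)=\rho_0+\alpha m_0(\rho_0)\tilde u_0(\rho_0)^{\alpha-1}t$ for $\rho_0\in[0,S_0]$ (an increasing bijection of $[0,S_0]$ onto $[0,\bar S(t)]$), where $\bar S(t)=S_0+\alpha M\tilde u_0(S_0)^{\alpha-1}t$. Define $\tilde u(t,\rho)=\big(\tilde u_0(P_t^{-1}(\rho))^{-\alpha}+\alpha t\big)^{-1/\alpha}$ if $\rho\le\bar S(t)$ and $\tilde u_0(P_t^{-1}(\rho))>0$, and $\tilde u(t,\rho)=0$ otherwise. Let $S$ be a solution of $S'(t)=M\,\tilde u(t,S(t))^{\alpha-1}$, $S(0)=S_0$, and set $u(t,\rho)=\tilde u(t,\rho)$ for $\rho<S(t)$, $u(t,\rho)=0$ for $\rho>S(t)$. Then $S(t)\le\bar S(t)$ for all $t\ge0$, and $m(t,\rho)=\int_0^\rho u(t,\sigma)d\sigma$ is a viscosity solution of the mass problem with initial datum $m_0$.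
   Context: The mass problem is $m_t+(m_\rho)_+^\alpha m=0$ for $t,\rho>0$, $m(t,0)=0$, $m(0,\rho)=m_0(\rho)$. Fréchet superdifferential $D^+f(x)=\{p:\limsup_{y\to x}\frac{f(y)-f(x)-p\cdot(y-x)}{|y-x|}\le0\}$ and subdifferential $D^-f$ with $\liminf\ge0$. A continuous $m$ on $[0,\infty)^2$ is a viscosity subsolution if $p_1+(p_2)_+^\alpha m(t,\rho)\le0$ for all $(t,\rho)\in(0,\infty)^2$, $(p_1,p_2)\in D^+m(t,\rho)$, with $m(0,\cdot)\le m_0$, $m(t,0)\le0$; a supersolution if $p_1+(p_2)_+^\alpha m\ge0$ for all $(p_1,p_2)\in D^-m(t,\rho)$, with $m(0,\cdot)\ge m_0$, $m(t,0)\ge0$; a viscosity solution if both. *)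

theory Defs
  imports "HOL-Analysis.Analysis"
begin

definition pair_inner :: "real \<times> real \<Rightarrow> real \<times> real \<Rightarrow> real" where
  "pair_inner p v = fst p * fst v + snd p * snd v"

definition frechet_superdiff :: "(real \<times> real \<Rightarrow> real) \<Rightarrow> real \<times> real \<Rightarrow> (real \<times> real) set" where
  "frechet_superdiff f x = {p. Limsup (at x)
      (\<lambda>y. ereal ((f y - f x - pair_inner p (y - x)) / norm (y - x))) \<le> 0}"

definition frechet_subdiff :: "(real \<times> real \<Rightarrow> real) \<Rightarrow> real \<times> real \<Rightarrow> (real \<times> real) set" where
  "frechet_subdiff f x = {p. Liminf (at x)
      (\<lambda>y. ereal ((f y - f x - pair_inner p (y - x)) / norm (y - x))) \<ge> 0}"

text \<open>Viscosity sub/super-solutions of m_t + (m_rho)_+^alpha m = 0 with data m(0,.) = m0, m(t,0) = 0.\<close>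
definition visc_subsol :: "real \<Rightarrow> (real \<Rightarrow> real) \<Rightarrow> (real \<times> real \<Rightarrow> real) \<Rightarrow> bool" where
  "visc_subsol \<alpha> m0 m \<longleftrightarrow>
     continuous_on ({0..} \<times> {0..}) m \<and>
     (\<forall>t>0. \<forall>\<rho>>0. \<forall>p\<in>frechet_superdiff m (t, \<rho>).
         fst p + (max (snd p) 0) powr \<alpha> * m (t, \<rho>) \<le> 0) \<and>
     (\<forall>\<rho>\<ge>0. m (0, \<rho>) \<le> m0 \<rho>) \<and>
     (\<forall>t\<ge>0. m (t, 0) \<le> 0)"

definition visc_supersol :: "real \<Rightarrow> (real \<Rightarrow> real) \<Rightarrow> (real \<times> real \<Rightarrow> real) \<Rightarrow> bool" where
  "visc_supersol \<alpha> m0 m \<longleftrightarrow>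
     continuous_on ({0..} \<times> {0..}) m \<and>
     (\<forall>t>0. \<forall>\<rho>>0. \<forall>p\<in>frechet_subdiff m (t, \<rho>).
         fst p + (max (snd p) 0) powr \<alpha> * m (t, \<rho>) \<ge> 0) \<and>
     (\<forall>\<rho>\<ge>0. m (0, \<rho>) \<ge> m0 \<rho>) \<and>
     (\<forall>t\<ge>0. m (t, 0) \<ge> 0)"

definition visc_sol :: "real \<Rightarrow> (real \<Rightarrow> real) \<Rightarrow> (real \<times> real \<Rightarrow> real) \<Rightarrow> bool" where
  "visc_sol \<alpha> m0 m \<longleftrightarrow> visc_subsol \<alpha> m0 m \<and> visc_supersol \<alpha> m0 m"

text \<open>Real power of a nonnegative base with the convention x^0 = 1 (also for x = 0).\<close>
definition pw :: "real \<Rightarrow> real \<Rightarrow> real" where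
  "pw x a = (if a = 0 then 1 else x powr a)"

end

theory Submission
  imports Defs
begin


locale mprob =
  fixes \<alpha> S0 :: real and ut0 :: "real \<Rightarrow> real"
  assumes ha: "\<alpha> \<ge> 1" and hS0: "S0 > 0"
    and hcont: "continuous_on {0..S0} ut0"
    and hmono: "mono_on {0..S0} ut0"
    and hnonneg: "\<forall>\<rho>\<in>{0..S0}. ut0 \<rho> \<ge> 0"
    and hpos: "ut0 S0 > 0"
begin

definition w :: "real \<Rightarrow> real" where "w x = ut0 (max 0 (min x S0))"

lemma w_cont: "continuous_on UNIV w"
proof -
  have "continuous_on UNIV (\<lambda>x. max 0 (min x S0))" by (intro continuous_intros)
  moreover have "(\<lambda>x. max 0 (min x S0)) ` UNIV \<subseteq> {0..S0}" using hS0 by auto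
  ultimately show ?thesis unfolding w_def
    using continuous_on_compose2[OF hcont] by blast
qed

lemma w_isCont: "isCont w x"
  using w_cont by (simp add: continuous_on_eq_continuous_at)

lemma w_mono: "x \<le> y \<Longrightarrow> w x \<le> w y"
  unfolding w_def using hS0 by (intro mono_onD[OF hmono]) auto

lemma w_nonneg: "w x \<ge> 0"
  unfolding w_def using hS0 hnonneg by auto

lemma w_eq: "0 \<le> x \<Longrightarrow> x \<le> S0 \<Longrightarrow> w x = ut0 x"
  unfolding w_def by (simp add: max_def min_def)

lemma w_big: "S0 \<le> x \<Longrightarrow> w x = ut0 S0"
  unfolding w_def using hS0 by (simp add: max_def min_def)

definition mm :: "real \<Rightarrow> real" where "mm s = integral {0..s} w"

lemma mm_0[simp]: "mm 0 = 0" unfolding mm_def by simp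

lemma mm_deriv: "0 \<le> s \<Longrightarrow> (mm has_real_derivative w s) (at s within {0..})"
proof -
  assume s: "0 \<le> s"
  have "(mm has_real_derivative w s) (at s within {0..s+1})"
    unfolding mm_def using s
    by (intro integral_has_real_derivative continuous_on_subset[OF w_cont]) auto
  moreover have "at s within {0..s+1} = at s within {0..}"
    by (rule at_within_nhd[where S="{..<s+1}"]) auto
  ultimately show ?thesis by simp
qed

lemma mm_deriv_at: "0 < s \<Longrightarrow> (mm has_real_derivative w s) (at s)"
proof -
  assume s: "0 < s"
  have "at s within {0..} = at s"
    by (rule at_within_interior) (use s in auto)
  then show ?thesis using mm_deriv[of s] s by simp
qed

lemma mm_cont: "continuous_on {0..} mm"
proof -
  have "continuous (at s within {0..}) mm" if "s \<in> {0..}" for s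
    using mm_deriv[of s] that DERIV_continuous by auto
  then show ?thesis using continuous_on_eq_continuous_within by blast
qed

lemma mm_mvt: assumes "0 \<le> s1" "s1 < s2"
  shows "\<exists>\<sigma>. s1 < \<sigma> \<and> \<sigma> < s2 \<and> mm s2 - mm s1 = w \<sigma> * (s2 - s1)"
proof -
  have c: "continuous_on {s1..s2} mm" using continuous_on_subset[OF mm_cont] assms by auto
  have d: "mm differentiable (at x)" if "s1 < x" "x < s2" for x
  proof -
    have "0 < x" using that assms by simp
    then show ?thesis using mm_deriv_at real_differentiable_def by blast
  qed
  obtain l z where lz: "s1 < z" "z < s2" "DERIV mm z :> l" "mm s2 - mm s1 = (s2 - s1) * l"
    using MVT[OF assms(2) c d] by blast
  have "0 < z" using lz assms by simp
  then have "l = w z" using DERIV_unique[OF lz(3) mm_deriv_at] by blast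
  then show ?thesis using lz by (auto simp: mult.commute)
qed

lemma mm_mono: assumes "0 \<le> s1" "s1 \<le> s2" shows "mm s1 \<le> mm s2"
proof (cases "s1 = s2")
  case False
  then have "s1 < s2" using assms by simp
  then obtain \<sigma> where "mm s2 - mm s1 = w \<sigma> * (s2 - s1)" using mm_mvt assms(1) by blast
  moreover have "w \<sigma> * (s2 - s1) \<ge> 0" using w_nonneg[of \<sigma>] assms by simp
  ultimately show ?thesis by linarith
qed simp

lemma mm_nonneg: "0 \<le> s \<Longrightarrow> mm s \<ge> 0"
  using mm_mono[of 0 s] by simp

lemma mm_zero: assumes "0 \<le> s" "w s = 0" shows "mm s = 0"
proof (cases "s = 0")
  case False
  then have "0 < s" using assms by simp
  then obtain \<sigma> where "\<sigma> < s" "mm s - mm 0 = w \<sigma> * (s - 0)" using mm_mvt[of 0 s] by auto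
  then show ?thesis using w_mono[of \<sigma> s] w_nonneg[of \<sigma>] assms by simp
qed simp

definition yp :: "real \<Rightarrow> real" where "yp v = pw v (\<alpha> - 1)"

lemma yp_nonneg: "v \<ge> 0 \<Longrightarrow> yp v \<ge> 0"
  unfolding yp_def pw_def by auto

lemma yp_mono: "0 \<le> v1 \<Longrightarrow> v1 \<le> v2 \<Longrightarrow> yp v1 \<le> yp v2"
proof (cases "\<alpha> = 1")
  case True then show ?thesis unfolding yp_def pw_def by simp
next
  case False
  assume "0 \<le> v1" "v1 \<le> v2"
  then show ?thesis unfolding yp_def pw_def using False ha by (simp add: powr_mono2)
qed

lemma yp_w_cont: "continuous_on UNIV (\<lambda>s. yp (w s))"
proof (cases "\<alpha> = 1")
  case True then show ?thesis unfolding yp_def pw_def by simp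
next
  case False
  then have "\<alpha> - 1 > 0" using ha by simp
  have "continuous_on UNIV (\<lambda>s. w s powr (\<alpha> - 1))"
    by (rule continuous_on_powr') (use w_nonneg \<open>\<alpha> - 1 > 0\<close> w_cont in auto)
  then show ?thesis unfolding yp_def pw_def using False by simp
qed

definition PP :: "real \<Rightarrow> real \<Rightarrow> real" where
  "PP t s = s + \<alpha> * t * mm s * yp (w s)"

definition KK :: "real \<Rightarrow> real" where "KK s = mm s * yp (w s)"

lemma PP_KK: "PP t s = s + \<alpha> * t * KK s"
  unfolding PP_def KK_def by simp

lemma KK_nonneg: "0 \<le> s \<Longrightarrow> KK s \<ge> 0"
  unfolding KK_def using mm_nonneg yp_nonneg w_nonneg by simp

lemma KK_mono: "0 \<le> s1 \<Longrightarrow> s1 \<le> s2 \<Longrightarrow> KK s1 \<le> KK s2"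
  unfolding KK_def
  by (intro mult_mono mm_mono yp_mono w_mono w_nonneg yp_nonneg mm_nonneg) auto

lemma PP_0[simp]: "PP t 0 = 0" unfolding PP_def by simp

lemma PP_strict: "0 \<le> t \<Longrightarrow> 0 \<le> s1 \<Longrightarrow> s1 < s2 \<Longrightarrow> PP t s1 < PP t s2"
  unfolding PP_KK using KK_mono[of s1 s2] ha
  by (smt (verit, best) mult_left_mono mult_nonneg_nonneg)

lemma PP_mono: "0 \<le> t \<Longrightarrow> 0 \<le> s1 \<Longrightarrow> s1 \<le> s2 \<Longrightarrow> PP t s1 \<le> PP t s2"
  using PP_strict by (cases "s1 = s2") (auto simp: less_imp_le)

lemma PP_ge: "0 \<le> t \<Longrightarrow> 0 \<le> s \<Longrightarrow> PP t s \<ge> s"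
  unfolding PP_KK using KK_nonneg[of s] ha by simp

lemma KK_cont: "continuous_on {0..} KK"
  unfolding KK_def
  by (intro continuous_intros mm_cont continuous_on_subset[OF yp_w_cont]) auto

lemma PP_cont_s: "continuous_on {0..} (PP t)"
  unfolding PP_KK by (intro continuous_intros KK_cont)

lemma PP_inj: "0 \<le> t \<Longrightarrow> inj_on (PP t) {0..}"
  by (rule strict_mono_on_imp_inj_on) (auto simp: strict_mono_on_def intro: PP_strict)

lemma PP_surj: assumes "0 \<le> t" "0 \<le> \<rho>" shows "\<exists>s\<in>{0..\<rho>}. PP t s = \<rho>"
proof -
  have "PP t 0 \<le> \<rho>" "\<rho> \<le> PP t \<rho>" using assms PP_ge by auto
  from IVT'[of "PP t" 0 \<rho> \<rho>, OF this assms(2) continuous_on_subset[OF PP_cont_s]]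
  show ?thesis by auto
qed

definition QQ :: "real \<Rightarrow> real \<Rightarrow> real" where
  "QQ t \<rho> = the_inv_into {0..} (PP t) \<rho>"

lemma QQ_props: assumes "0 \<le> t" "0 \<le> \<rho>"
  shows "PP t (QQ t \<rho>) = \<rho>" "0 \<le> QQ t \<rho>" "QQ t \<rho> \<le> \<rho>"
proof -
  obtain s where s: "s \<in> {0..\<rho>}" "PP t s = \<rho>" using PP_surj assms by blast
  have "QQ t \<rho> = s" unfolding QQ_def
    using the_inv_into_f_f[OF PP_inj[OF assms(1)], of s] s by auto
  then show "PP t (QQ t \<rho>) = \<rho>" "0 \<le> QQ t \<rho>" "QQ t \<rho> \<le> \<rho>" using s by auto
qed

lemma QQ_PP: assumes "0 \<le> t" "0 \<le> s" shows "QQ t (PP t s) = s"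
  unfolding QQ_def using the_inv_into_f_f[OF PP_inj[OF assms(1)], of s] assms by auto

lemma QQ_0[simp]: "0 \<le> t \<Longrightarrow> QQ t 0 = 0"
  using QQ_PP[of t 0] by simp

lemma QQ_less_iff: assumes "0 \<le> t" "0 \<le> \<rho>" "0 \<le> s"
  shows "QQ t \<rho> < s \<longleftrightarrow> \<rho> < PP t s"
proof
  assume "QQ t \<rho> < s"
  then have "PP t (QQ t \<rho>) < PP t s" using PP_strict[OF assms(1)] QQ_props(2)[OF assms(1,2)] by blast
  then show "\<rho> < PP t s" using QQ_props(1)[OF assms(1,2)] by simp
next
  assume a: "\<rho> < PP t s"
  show "QQ t \<rho> < s"
  proof (rule ccontr)
    assume "\<not> QQ t \<rho> < s"
    then have "PP t s \<le> PP t (QQ t \<rho>)" using PP_mono[OF assms(1) assms(3)] by simp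
    then show False using a QQ_props(1)[OF assms(1,2)] by simp
  qed
qed

lemma QQ_mono: assumes "0 \<le> t" "0 \<le> \<rho>1" "\<rho>1 \<le> \<rho>2" shows "QQ t \<rho>1 \<le> QQ t \<rho>2"
proof (rule ccontr)
  assume "\<not> QQ t \<rho>1 \<le> QQ t \<rho>2"
  then have "QQ t \<rho>2 < QQ t \<rho>1" by simp
  moreover have "0 \<le> \<rho>2" using assms by simp
  ultimately have "\<rho>2 < PP t (QQ t \<rho>1)"
    using QQ_less_iff[OF assms(1)] QQ_props(2)[OF assms(1,2)] by blast
  then show False using QQ_props(1)[OF assms(1,2)] assms(3) by simp
qed

lemma QQ_pos: assumes "0 \<le> t" "0 < \<rho>" shows "0 < QQ t \<rho>"
  using QQ_props[of t \<rho>] assms by (metis PP_0 less_eq_real_def)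

end



context mprob begin

abbreviation "DD \<equiv> ({0..} \<times> {0..} :: (real \<times> real) set)"

lemma a_pos: "\<alpha> > 0" using ha by simp

lemma QQ_cont: "continuous_on DD (\<lambda>(t,\<rho>). QQ t \<rho>)"
  unfolding continuous_on_iff
proof (intro ballI allI impI)
  fix x :: "real \<times> real" and e :: real
  assume x: "x \<in> DD" and e: "0 < e"
  obtain t \<rho> where xtr: "x = (t,\<rho>)" by (cases x)
  have t: "0 \<le> t" and r: "0 \<le> \<rho>" using x xtr by auto
  define s where "s = QQ t \<rho>"
  have s0: "0 \<le> s" using QQ_props(2)[OF t r] s_def by simp
  define a where "a = s + e/2"
  define b where "b = s - e/2"
  have a0: "0 \<le> a" using s0 e a_def by simp
  have g1: "PP t a - \<rho> > 0" using QQ_less_iff[OF t r a0] s_def a_def e by simp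
  have g2: "b \<ge> 0 \<Longrightarrow> \<rho> - PP t b > 0"
  proof -
    assume b0: "b \<ge> 0"
    have "PP t b < PP t s" using PP_strict[OF t b0] b_def e by simp
    then show ?thesis using QQ_props(1)[OF t r] s_def by simp
  qed
  define d1 where "d1 = (PP t a - \<rho>) / (\<alpha> * KK a + 1)"
  define d2 where "d2 = (if b \<ge> 0 then (\<rho> - PP t b) / (\<alpha> * KK b + 1) else 1)"
  have Ka: "\<alpha> * KK a \<ge> 0" using KK_nonneg[OF a0] a_pos by simp
  have d1: "d1 > 0" unfolding d1_def using g1 Ka by simp
  have d2: "d2 > 0"
  proof (cases "b \<ge> 0")
    case True
    then have "\<alpha> * KK b \<ge> 0" using KK_nonneg a_pos by simp
    then show ?thesis unfolding d2_def using g2 True by simp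
  qed (simp add: d2_def)
  show "\<exists>d>0. \<forall>x'\<in>DD. dist x' x < d \<longrightarrow> dist ((\<lambda>(t, \<rho>). QQ t \<rho>) x') ((\<lambda>(t, \<rho>). QQ t \<rho>) x) < e"
  proof (intro exI[of _ "min d1 d2"] conjI ballI impI)
    show "0 < min d1 d2" using d1 d2 by simp
    fix x' :: "real \<times> real" assume x': "x' \<in> DD" and dx: "dist x' x < min d1 d2"
    obtain t' \<rho>' where xtr': "x' = (t',\<rho>')" by (cases x')
    have t': "0 \<le> t'" and r': "0 \<le> \<rho>'" using x' xtr' by auto
    have dt: "\<bar>t' - t\<bar> < min d1 d2"
      using dist_fst_le[of x' x] dx xtr xtr' by (simp add: dist_real_def)
    have dr: "\<bar>\<rho>' - \<rho>\<bar> < min d1 d2"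
      using dist_snd_le[of x' x] dx xtr xtr' by (simp add: dist_real_def)
    define s' where "s' = QQ t' \<rho>'"
    have up: "s' < a"
    proof -
      have eq: "PP t' a - PP t a = (\<alpha> * KK a) * (t' - t)" unfolding PP_KK by (simp add: algebra_simps)
      have "t' - t > - d1" using dt by linarith
      then have "(\<alpha> * KK a) * (t' - t) \<ge> (\<alpha> * KK a) * (- d1)" using Ka by (intro mult_left_mono) auto
      then have A: "PP t' a \<ge> PP t a - \<alpha> * KK a * d1" using eq by simp
      have "\<alpha> * KK a * d1 + d1 = (\<alpha> * KK a + 1) * d1" by (simp add: algebra_simps)
      also have "\<dots> = PP t a - \<rho>" unfolding d1_def using Ka by simp
      finally have B: "\<alpha> * KK a * d1 + d1 = PP t a - \<rho>" .
      have "\<rho>' < \<rho> + d1" using dr by linarith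
      then have "\<rho>' < PP t' a" using A B by linarith
      then show ?thesis using QQ_less_iff[OF t' r' a0] s'_def by simp
    qed
    have low: "b < s'"
    proof (cases "b \<ge> 0")
      case False
      then show ?thesis using QQ_props(2)[OF t' r'] s'_def by simp
    next
      case True
      have Kb: "\<alpha> * KK b \<ge> 0" using KK_nonneg[OF True] a_pos by simp
      have eq: "PP t' b - PP t b = (\<alpha> * KK b) * (t' - t)" unfolding PP_KK by (simp add: algebra_simps)
      have "t' - t < d2" using dt by linarith
      then have "(\<alpha> * KK b) * (t' - t) \<le> (\<alpha> * KK b) * d2" using Kb by (intro mult_left_mono) auto
      then have A: "PP t' b \<le> PP t b + \<alpha> * KK b * d2" using eq by simp
      have "\<alpha> * KK b * d2 + d2 = (\<alpha> * KK b + 1) * d2" by (simp add: algebra_simps)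
      also have "\<dots> = \<rho> - PP t b" unfolding d2_def using Kb True by simp
      finally have C: "\<alpha> * KK b * d2 + d2 = \<rho> - PP t b" .
      have "\<rho>' > \<rho> - d2" using dr by linarith
      then have B: "PP t' b < \<rho>'" using A C by linarith
      show ?thesis
      proof (rule ccontr)
        assume "\<not> b < s'"
        then have "PP t' s' \<le> PP t' b" using PP_mono[OF t'] QQ_props(2)[OF t' r'] s'_def by simp
        then show False using B QQ_props(1)[OF t' r'] s'_def by simp
      qed
    qed
    show "dist ((\<lambda>(t, \<rho>). QQ t \<rho>) x') ((\<lambda>(t, \<rho>). QQ t \<rho>) x) < e"
      using up low xtr xtr' s_def s'_def a_def b_def e by (simp add: dist_real_def)
  qed
qed

lemma cont_powr_nonneg:
  assumes "continuous_on S f" "\<And>x. x \<in> S \<Longrightarrow> f x \<ge> 0" "(c::real) > 0"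
  shows "continuous_on S (\<lambda>x. f x powr c)"
proof (rule continuous_on_powr'[OF assms(1) continuous_on_const], intro ballI)
  fix x assume "x \<in> S"
  then have "f x \<ge> 0" by (rule assms(2))
  then show "f x \<ge> 0 \<and> (f x = 0 \<longrightarrow> c > 0)" using assms(3) by simp
qed

lemma cont_powr_pos:
  assumes "continuous_on S f" "\<And>x. x \<in> S \<Longrightarrow> f x > 0"
  shows "continuous_on S (\<lambda>x. f x powr (c::real))"
proof (rule continuous_on_powr'[OF assms(1) continuous_on_const], intro ballI)
  fix x assume "x \<in> S"
  then have "f x > 0" by (rule assms(2))
  then show "f x \<ge> 0 \<and> (f x = 0 \<longrightarrow> c > 0)" by simp
qed

lemma wQQ_cont: "continuous_on DD (\<lambda>(t,\<rho>). w (QQ t \<rho>))"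
proof -
  have "continuous_on DD (\<lambda>x. w ((\<lambda>(t,\<rho>). QQ t \<rho>) x))"
    using continuous_on_compose2[OF w_cont QQ_cont] by blast
  then show ?thesis by (simp add: case_prod_unfold)
qed

definition cc :: "real \<Rightarrow> real \<Rightarrow> real" where
  "cc t v = v * (1 + \<alpha> * t * v powr \<alpha>) powr (- 1 / \<alpha>)"

definition AA :: "real \<Rightarrow> real \<Rightarrow> real" where
  "AA t v = (1 + \<alpha> * t * v powr \<alpha>) powr ((\<alpha> - 1) / \<alpha>)"

definition uh :: "real \<Rightarrow> real \<Rightarrow> real" where
  "uh t \<rho> = cc t (w (QQ t \<rho>))"

definition FF :: "real \<Rightarrow> real \<Rightarrow> real" where
  "FF t s = mm s * AA t (w s)"

lemma base_pos: "0 \<le> t \<Longrightarrow> 0 \<le> v \<Longrightarrow> 1 + \<alpha> * t * v powr \<alpha> \<ge> 1"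
  using a_pos by simp

lemma cc_nonneg: "0 \<le> t \<Longrightarrow> 0 \<le> v \<Longrightarrow> cc t v \<ge> 0"
  unfolding cc_def by simp

lemma cc_pos: "0 \<le> t \<Longrightarrow> 0 < v \<Longrightarrow> cc t v > 0"
  unfolding cc_def using base_pos[of t v] by simp

lemma cc_zero: "cc t 0 = 0" unfolding cc_def by simp

lemma comp_cont_gen:
  assumes f: "continuous_on S f" and g: "continuous_on S g"
    and gnn: "\<And>x. x \<in> S \<Longrightarrow> g x \<ge> 0" and fnn: "\<And>x. x \<in> S \<Longrightarrow> f x \<ge> 0"
  shows "continuous_on S (\<lambda>x. (1 + \<alpha> * f x * g x powr \<alpha>) powr c)"
proof -
  have "continuous_on S (\<lambda>x. g x powr \<alpha>)" using cont_powr_nonneg[OF g gnn a_pos] .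
  then have "continuous_on S (\<lambda>x. 1 + \<alpha> * f x * g x powr \<alpha>)"
    by (intro continuous_on_add continuous_on_const continuous_on_mult f)
  moreover have "\<And>x. x \<in> S \<Longrightarrow> 1 + \<alpha> * f x * g x powr \<alpha> > 0"
    using base_pos gnn fnn by (smt (verit))
  ultimately show ?thesis using cont_powr_pos by blast
qed

lemma uh_cont: "continuous_on DD (\<lambda>(t,\<rho>). uh t \<rho>)"
proof -
  have g: "continuous_on DD (\<lambda>x. w (QQ (fst x) (snd x)))"
    using wQQ_cont by (simp add: case_prod_unfold)
  have f: "continuous_on DD (\<lambda>x. fst x)" by (intro continuous_intros)
  have "continuous_on DD (\<lambda>x. w (QQ (fst x) (snd x)) * (1 + \<alpha> * fst x * w (QQ (fst x) (snd x)) powr \<alpha>) powr (- 1 / \<alpha>))"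
    by (intro continuous_intros g comp_cont_gen[OF f g]) (auto simp: w_nonneg)
  then show ?thesis by (simp add: uh_def cc_def case_prod_unfold)
qed

lemma uh_nonneg: "0 \<le> t \<Longrightarrow> uh t \<rho> \<ge> 0"
  unfolding uh_def using cc_nonneg w_nonneg by simp

lemma FF_cont: "continuous_on DD (\<lambda>(t,s). FF t s)"
proof -
  have g: "continuous_on DD (\<lambda>x. w (snd x))"
    by (intro continuous_on_compose2[OF w_cont]) (auto intro: continuous_intros)
  have f: "continuous_on DD (\<lambda>x. fst x)" by (intro continuous_intros)
  have m: "continuous_on DD (\<lambda>x. mm (snd x))"
    by (rule continuous_on_compose2[OF mm_cont]) (auto intro: continuous_intros)
  have "continuous_on DD (\<lambda>x. mm (snd x) * (1 + \<alpha> * fst x * w (snd x) powr \<alpha>) powr ((\<alpha> - 1) / \<alpha>))"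
    by (intro continuous_intros m comp_cont_gen[OF f g]) (auto simp: w_nonneg)
  then show ?thesis by (simp add: FF_def AA_def case_prod_unfold)
qed

lemma FFQQ_cont: "continuous_on DD (\<lambda>(t,\<rho>). FF t (QQ t \<rho>))"
proof -
  have "continuous_on DD (\<lambda>x. (fst x, QQ (fst x) (snd x)))"
    using QQ_cont by (auto intro!: continuous_intros simp: case_prod_unfold)
  moreover have "(\<lambda>x. (fst x, QQ (fst x) (snd x))) ` DD \<subseteq> DD"
    using QQ_props(2) by auto
  ultimately have "continuous_on DD (\<lambda>x. (\<lambda>(t,s). FF t s) (fst x, QQ (fst x) (snd x)))"
    using continuous_on_compose2[OF FF_cont] by blast
  then show ?thesis by (simp add: case_prod_unfold)
qed

end



context mprob begin

lemma v_yp: "0 \<le> v \<Longrightarrow> v * yp v = v powr \<alpha>"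
proof (cases "\<alpha> = 1")
  case True
  assume "0 \<le> v" then show ?thesis using True unfolding yp_def pw_def by simp
next
  case False
  assume v: "0 \<le> v"
  have "v * v powr (\<alpha> - 1) = v powr (1 + (\<alpha> - 1))" by (rule powr_mult_base[OF v])
  then show ?thesis using False unfolding yp_def pw_def by simp
qed

lemma AA_split: "0 \<le> t \<Longrightarrow> 0 \<le> v \<Longrightarrow>
  AA t v = (1 + \<alpha> * t * v powr \<alpha>) * (1 + \<alpha> * t * v powr \<alpha>) powr (- 1 / \<alpha>)"
proof -
  assume t: "0 \<le> t" and v: "0 \<le> v"
  define B where "B = 1 + \<alpha> * t * v powr \<alpha>"
  have B: "B > 0" using base_pos[OF t v] B_def by simp
  have e: "(\<alpha> - 1) / \<alpha> = 1 + (- 1 / \<alpha>)" using a_pos by (simp add: field_simps)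
  have "B powr ((\<alpha> - 1) / \<alpha>) = B powr 1 * B powr (- 1 / \<alpha>)" unfolding e by (rule powr_add)
  then show ?thesis unfolding AA_def B_def[symmetric] using B by simp
qed

lemma cc_identity: "0 \<le> t \<Longrightarrow> 0 \<le> v \<Longrightarrow> v * (AA t v - \<alpha> * t * cc t v * yp v) = cc t v"
proof -
  assume t: "0 \<le> t" and v: "0 \<le> v"
  define B where "B = 1 + \<alpha> * t * v powr \<alpha>"
  define E where "E = B powr (- 1 / \<alpha>)"
  have A: "AA t v = B * E" using AA_split[OF t v] B_def E_def by simp
  have c: "cc t v = v * E" unfolding cc_def B_def E_def by simp
  have "v * (AA t v - \<alpha> * t * cc t v * yp v) = v * E * (B - \<alpha> * t * (v * yp v))"
    unfolding A c by (simp add: algebra_simps)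
  also have "\<dots> = v * E" unfolding v_yp[OF v] B_def by simp
  finally show ?thesis using c by simp
qed

lemma AA_one: "\<alpha> = 1 \<Longrightarrow> 0 \<le> t \<Longrightarrow> 0 \<le> v \<Longrightarrow> AA t v = 1"
proof -
  assume a: "\<alpha> = 1" "0 \<le> t" "0 \<le> v"
  have "0 \<le> t * v" using a by simp
  then have "1 + t * v \<noteq> 0" by linarith
  then show ?thesis unfolding AA_def using a by simp
qed

lemma AA_t0: "AA 0 v = 1" unfolding AA_def by simp

lemma yp_one: "\<alpha> = 1 \<Longrightarrow> yp v = 1" unfolding yp_def pw_def by simp

lemma AA_yp_mvt: assumes a1: "\<alpha> > 1" and t: "t \<ge> 0" and v1: "0 \<le> v1" and v12: "v1 < v2"
  shows "\<exists>z. v1 < z \<and> z < v2 \<and> AA t v2 - AA t v1 = \<alpha> * t * cc t z * (yp v2 - yp v1)"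
proof -
  define f where "f v = (1 + \<alpha> * t * \<bar>v\<bar> powr \<alpha>) powr ((\<alpha> - 1) / \<alpha>)" for v
  define g where "g v = \<bar>v\<bar> powr (\<alpha> - 1)" for v
  have cabs: "continuous_on UNIV (\<lambda>v::real. \<bar>v\<bar>)" by (intro continuous_intros)
  have fc: "continuous_on UNIV f" unfolding f_def
    by (rule comp_cont_gen[OF continuous_on_const cabs]) (use t in auto)
  have gc: "continuous_on UNIV g" unfolding g_def
    by (rule cont_powr_nonneg[OF cabs]) (use a1 in auto)
  have DG: "DERIV g z :> (\<alpha> - 1) * z powr (\<alpha> - 2)" if z: "0 < z" for z
  proof -
    have ev: "eventually (\<lambda>v. v \<in> {0<..}) (nhds z)"
      by (rule eventually_nhds_in_open) (use z in auto)
    have "eventually (\<lambda>v. v powr (\<alpha> - 1) = g v) (nhds z)"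
      using ev by eventually_elim (simp add: g_def)
    moreover have "DERIV (\<lambda>v. v powr (\<alpha> - 1)) z :> (\<alpha> - 1) * z powr (\<alpha> - 1 - 1)"
      by (rule has_real_derivative_powr[OF z])
    ultimately show ?thesis using DERIV_cong_ev[of z z "\<lambda>v. v powr (\<alpha> - 1)" g] by simp
  qed
  have DF: "DERIV f z :> \<alpha> * t * cc t z * ((\<alpha> - 1) * z powr (\<alpha> - 2))" if z: "0 < z" for z
  proof -
    define B where "B = 1 + \<alpha> * t * z powr \<alpha>"
    have B: "B > 0" using base_pos[OF t, of z] z B_def by simp
    have ev: "eventually (\<lambda>v. v \<in> {0<..}) (nhds z)"
      by (rule eventually_nhds_in_open) (use z in auto)
    have evf: "eventually (\<lambda>v. (1 + \<alpha> * t * v powr \<alpha>) powr ((\<alpha> - 1) / \<alpha>) = f v) (nhds z)"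
      using ev by eventually_elim (simp add: f_def)
    have d1: "DERIV (\<lambda>v. 1 + \<alpha> * t * v powr \<alpha>) z :> \<alpha> * t * (\<alpha> * z powr (\<alpha> - 1))"
      by (intro derivative_eq_intros has_real_derivative_powr[OF z]) (use z in auto)
    have d2: "DERIV (\<lambda>v. (1 + \<alpha> * t * v powr \<alpha>) powr ((\<alpha> - 1) / \<alpha>)) z :>
       (\<alpha> - 1) / \<alpha> * B powr ((\<alpha> - 1) / \<alpha> - of_nat 1) * (\<alpha> * t * (\<alpha> * z powr (\<alpha> - 1)))"
      using DERIV_fun_powr[OF d1, of "(\<alpha> - 1) / \<alpha>"] B B_def by simp
    have r1: "(\<alpha> - 1) / \<alpha> - of_nat 1 = - 1 / \<alpha>" using a_pos by (simp add: field_simps)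
    have zz: "z * z powr (\<alpha> - 2) = z powr (\<alpha> - 1)"
      using powr_mult_base[of z "\<alpha> - 2"] z by simp
    have "(\<alpha> - 1) / \<alpha> * B powr ((\<alpha> - 1) / \<alpha> - of_nat 1) * (\<alpha> * t * (\<alpha> * z powr (\<alpha> - 1)))
        = \<alpha> * t * (\<alpha> - 1) * B powr (- 1 / \<alpha>) * z powr (\<alpha> - 1)"
      unfolding r1 using a_pos by (simp add: field_simps)
    also have "\<dots> = \<alpha> * t * cc t z * ((\<alpha> - 1) * z powr (\<alpha> - 2))"
      unfolding cc_def B_def[symmetric] zz[symmetric] by (simp add: algebra_simps)
    finally have "DERIV (\<lambda>v. (1 + \<alpha> * t * v powr \<alpha>) powr ((\<alpha> - 1) / \<alpha>)) z :> \<alpha> * t * cc t z * ((\<alpha> - 1) * z powr (\<alpha> - 2))"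
      using d2 by simp
    then show ?thesis
      using DERIV_cong_ev[of z z "\<lambda>v. (1 + \<alpha> * t * v powr \<alpha>) powr ((\<alpha> - 1) / \<alpha>)" f] evf by simp
  qed
  have v1pos: "\<And>z. v1 < z \<Longrightarrow> 0 < z" using v1 by simp
  obtain z where z: "v1 < z" "z < v2"
    "(f v2 - f v1) * ((\<alpha> - 1) * z powr (\<alpha> - 2)) = (g v2 - g v1) * (\<alpha> * t * cc t z * ((\<alpha> - 1) * z powr (\<alpha> - 2)))"
    using GMVT'[OF v12, of f g "\<lambda>z. (\<alpha> - 1) * z powr (\<alpha> - 2)" "\<lambda>z. \<alpha> * t * cc t z * ((\<alpha> - 1) * z powr (\<alpha> - 2))"]
      fc gc DG DF v1pos by (auto simp: continuous_on_eq_continuous_at)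
  have pos: "(\<alpha> - 1) * z powr (\<alpha> - 2) > 0" using a1 z v1 by simp
  have "(f v2 - f v1) * ((\<alpha> - 1) * z powr (\<alpha> - 2)) = ((g v2 - g v1) * (\<alpha> * t * cc t z)) * ((\<alpha> - 1) * z powr (\<alpha> - 2))"
    using z(3) by (simp only: mult.assoc)
  then have "f v2 - f v1 = (g v2 - g v1) * (\<alpha> * t * cc t z)"
    using pos by (simp only: mult_right_cancel less_irrefl)
  moreover have "f v2 = AA t v2" "f v1 = AA t v1" "g v2 = yp v2" "g v1 = yp v1"
    using v1 v12 a1 by (auto simp: f_def g_def AA_def yp_def pw_def)
  ultimately show ?thesis using z by (auto simp: algebra_simps)
qed

end



context mprob begin

lemma cont_at_eps: "continuous_on UNIV f \<Longrightarrow> e > 0 \<Longrightarrow> \<exists>d>0. \<forall>y. dist y x < d \<longrightarrow> dist (f y) (f x) < e"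
  unfolding continuous_on_iff by blast

lemma KE_interval: assumes t: "0 \<le> t" and s: "0 \<le> s" and e: "e > 0"
  shows "\<exists>\<delta>>0. \<forall>s1 s2. 0 \<le> s1 \<longrightarrow> s1 \<le> s \<longrightarrow> s \<le> s2 \<longrightarrow> s2 - s1 < \<delta> \<longrightarrow>
     \<bar>FF t s2 - FF t s1 - cc t (w s) * (PP t s2 - PP t s1)\<bar> \<le> e * (PP t s2 - PP t s1)"
proof -
  define v0 where "v0 = w s"
  define c where "c = cc t v0"
  define \<Psi> where "\<Psi> p = w (fst p) * (AA t (w (snd p)) - \<alpha> * t * c * yp (w (snd p))) - c" for p :: "real \<times> real"
  have v0: "0 \<le> v0" using w_nonneg v0_def by simp
  have Psi0: "\<Psi> (s,s) = 0" unfolding \<Psi>_def using cc_identity[OF t v0] c_def v0_def by simp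
  have wf: "continuous_on UNIV (\<lambda>p::real\<times>real. w (fst p))"
    by (rule continuous_on_compose2[OF w_cont]) (auto intro: continuous_intros)
  have ws: "continuous_on UNIV (\<lambda>p::real\<times>real. w (snd p))"
    by (rule continuous_on_compose2[OF w_cont]) (auto intro: continuous_intros)
  have ys: "continuous_on UNIV (\<lambda>p::real\<times>real. yp (w (snd p)))"
    by (rule continuous_on_compose2[OF yp_w_cont]) (auto intro: continuous_intros)
  have As: "continuous_on UNIV (\<lambda>p::real\<times>real. AA t (w (snd p)))"
    unfolding AA_def by (rule comp_cont_gen[OF continuous_on_const ws]) (use t w_nonneg in auto)
  have Psic: "continuous_on UNIV \<Psi>" unfolding \<Psi>_def
    by (intro continuous_on_diff continuous_on_mult wf As ys continuous_on_const)
  obtain d1 where d1: "d1 > 0" "\<And>p. dist p (s,s) < d1 \<Longrightarrow> \<bar>\<Psi> p\<bar> < e/2"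
    using cont_at_eps[OF Psic, of "e/2" "(s,s)"] e Psi0 by (auto simp: dist_real_def)
  have ccw: "continuous_on UNIV (\<lambda>b. cc t (w b))"
  proof -
    have "continuous_on UNIV (\<lambda>b. w b * (1 + \<alpha> * t * w b powr \<alpha>) powr (- 1 / \<alpha>))"
      by (intro continuous_on_mult w_cont comp_cont_gen[OF continuous_on_const w_cont]) (use t w_nonneg in auto)
    then show ?thesis unfolding cc_def by simp
  qed
  obtain d2 where d2: "d2 > 0" "\<And>b. dist b s < d2 \<Longrightarrow> \<bar>cc t (w b) - c\<bar> < e/2"
    using cont_at_eps[OF ccw, of "e/2" s] e by (auto simp: dist_real_def c_def v0_def)
  show ?thesis
  proof (intro exI[of _ "min (d1/2) d2"] conjI allI impI)
    show "0 < min (d1/2) d2" using d1 d2 by simp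
    fix s1 s2 assume s1: "0 \<le> s1" and s1s: "s1 \<le> s" and ss2: "s \<le> s2" and dd: "s2 - s1 < min (d1/2) d2"
    show "\<bar>FF t s2 - FF t s1 - cc t (w s) * (PP t s2 - PP t s1)\<bar> \<le> e * (PP t s2 - PP t s1)"
    proof (cases "s1 = s2")
      case True then show ?thesis by simp
    next
      case False
      then have lt: "s1 < s2" using s1s ss2 by simp
      define m1 where "m1 = mm s1"
      define m2 where "m2 = mm s2"
      define y1 where "y1 = yp (w s1)"
      define y2 where "y2 = yp (w s2)"
      define A1 where "A1 = AA t (w s1)"
      define A2 where "A2 = AA t (w s2)"
      have m1: "0 \<le> m1" using mm_nonneg s1 m1_def by simp
      have m12: "m1 \<le> m2" using mm_mono s1 lt m1_def m2_def by simp
      have y12: "y1 \<le> y2" using yp_mono[OF w_nonneg w_mono] lt y1_def y2_def by simp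
      have y1: "0 \<le> y1" using yp_nonneg w_nonneg y1_def by simp
      have PPd: "PP t s2 - PP t s1 = (s2 - s1) + \<alpha> * t * ((m2 - m1) * y2) + \<alpha> * t * (m1 * (y2 - y1))"
        unfolding PP_def m1_def m2_def y1_def y2_def by (simp add: algebra_simps)
      have atn: "0 \<le> \<alpha> * t" using a_pos t by simp
      have P1: "0 \<le> \<alpha> * t * ((m2 - m1) * y2)" using atn m12 y1 y12 by simp
      have P2: "0 \<le> \<alpha> * t * (m1 * (y2 - y1))" using atn m1 y12 by simp
      define X where "X = (m2 - m1) * (A2 - \<alpha> * t * c * y2) - c * (s2 - s1)"
      define Y where "Y = m1 * ((A2 - A1) - \<alpha> * t * c * (y2 - y1))"
      have dec: "FF t s2 - FF t s1 - cc t (w s) * (PP t s2 - PP t s1) = X + Y"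
        unfolding X_def Y_def FF_def PP_def m1_def m2_def y1_def y2_def A1_def A2_def c_def v0_def
        by (simp add: algebra_simps)
      obtain \<sigma> where \<sigma>: "s1 < \<sigma>" "\<sigma> < s2" "m2 - m1 = w \<sigma> * (s2 - s1)"
        using mm_mvt[OF s1 lt] m1_def m2_def by blast
      have "X = (s2 - s1) * \<Psi> (\<sigma>, s2)"
        unfolding X_def \<Psi>_def \<sigma>(3) A2_def y2_def by (simp add: algebra_simps)
      moreover have "dist (\<sigma>, s2) (s, s) < d1"
      proof -
        have "dist (\<sigma>, s2) (s, s) = sqrt ((\<sigma> - s)\<^sup>2 + (s2 - s)\<^sup>2)"
          by (simp add: dist_Pair_Pair dist_real_def)
        also have "\<dots> \<le> \<bar>\<sigma> - s\<bar> + \<bar>s2 - s\<bar>" by (rule sqrt_sum_squares_le_sum_abs)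
        also have "\<dots> < d1" using \<sigma> s1s ss2 dd by (simp add: abs_if)
        finally show ?thesis .
      qed
      ultimately have Xb: "\<bar>X\<bar> \<le> (e/2) * (s2 - s1)"
        using d1(2)[of "(\<sigma>, s2)"] lt by (simp add: abs_mult mult.commute mult_left_mono less_imp_le)
      have Yb: "\<bar>Y\<bar> \<le> (e/2) * (\<alpha> * t * (m1 * (y2 - y1)))"
      proof (cases "\<alpha> = 1")
        case True
        then have "A1 = 1" "A2 = 1" "y1 = 1" "y2 = 1"
          using AA_one[OF True t w_nonneg] yp_one[OF True] A1_def A2_def y1_def y2_def by auto
        then show ?thesis unfolding Y_def using e by simp
      next
        case False
        then have a1: "\<alpha> > 1" using ha by simp
        show ?thesis
        proof (cases "w s1 = w s2")
          case True
          then have "A1 = A2" "y1 = y2" using A1_def A2_def y1_def y2_def by auto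
          then show ?thesis unfolding Y_def using e by simp
        next
          case False
          then have wlt: "w s1 < w s2" using w_mono[of s1 s2] lt by simp
          obtain z where z: "w s1 < z" "z < w s2" "A2 - A1 = \<alpha> * t * cc t z * (y2 - y1)"
            using AA_yp_mvt[OF a1 t w_nonneg wlt] A1_def A2_def y1_def y2_def by blast
          obtain \<sigma>' where \<sigma>': "s1 \<le> \<sigma>'" "\<sigma>' \<le> s2" "w \<sigma>' = z"
            using IVT'[of w s1 z s2] z lt continuous_on_subset[OF w_cont] by auto
          have "dist \<sigma>' s < d2" using \<sigma>' s1s ss2 dd by (simp add: dist_real_def abs_if)
          then have cz: "\<bar>cc t z - c\<bar> < e/2" using d2(2) \<sigma>'(3) by blast
          have "Y = (cc t z - c) * (\<alpha> * t * (m1 * (y2 - y1)))"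
            unfolding Y_def z(3) by (simp add: algebra_simps)
          then have "\<bar>Y\<bar> = \<bar>cc t z - c\<bar> * (\<alpha> * t * (m1 * (y2 - y1)))"
            using P2 by (metis abs_mult abs_of_nonneg)
          also have "\<dots> \<le> (e/2) * (\<alpha> * t * (m1 * (y2 - y1)))"
            using cz P2 by (intro mult_right_mono) auto
          finally show ?thesis .
        qed
      qed
      have "\<bar>X + Y\<bar> \<le> (e/2) * (s2 - s1) + (e/2) * (\<alpha> * t * (m1 * (y2 - y1)))"
        using Xb Yb by linarith
      also have "\<dots> \<le> (e/2) * (PP t s2 - PP t s1) + (e/2) * (PP t s2 - PP t s1)"
        using PPd P1 P2 e lt by (intro add_mono mult_left_mono) auto
      finally show ?thesis using dec by simp
    qed
  qed
qed

lemma KE: assumes t: "0 \<le> t" and s: "0 \<le> s" and e: "e > 0"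
  shows "\<exists>\<delta>>0. \<forall>s'. 0 \<le> s' \<longrightarrow> \<bar>s' - s\<bar> < \<delta> \<longrightarrow>
     \<bar>FF t s' - FF t s - cc t (w s) * (PP t s' - PP t s)\<bar> \<le> e * \<bar>PP t s' - PP t s\<bar>"
proof -
  obtain \<delta> where d: "\<delta> > 0" and H: "\<And>s1 s2. 0 \<le> s1 \<Longrightarrow> s1 \<le> s \<Longrightarrow> s \<le> s2 \<Longrightarrow> s2 - s1 < \<delta> \<Longrightarrow>
     \<bar>FF t s2 - FF t s1 - cc t (w s) * (PP t s2 - PP t s1)\<bar> \<le> e * (PP t s2 - PP t s1)"
    using KE_interval[OF t s e] by blast
  show ?thesis
  proof (intro exI[of _ \<delta>] conjI allI impI)
    fix s' assume s': "0 \<le> s'" "\<bar>s' - s\<bar> < \<delta>"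
    show "\<bar>FF t s' - FF t s - cc t (w s) * (PP t s' - PP t s)\<bar> \<le> e * \<bar>PP t s' - PP t s\<bar>"
    proof (cases "s \<le> s'")
      case True
      have "PP t s \<le> PP t s'" using PP_mono[OF t s True] .
      then show ?thesis using H[of s s'] True s' s by simp
    next
      case False
      have "PP t s' \<le> PP t s" using PP_mono[OF t s'(1)] False by simp
      moreover have "\<bar>FF t s - FF t s' - cc t (w s) * (PP t s - PP t s')\<bar> \<le> e * (PP t s - PP t s')"
        using H[of s' s] False s' by simp
      ultimately show ?thesis by (simp add: abs_minus_commute algebra_simps)
    qed
  qed
  (use d in simp)
qed

end



context mprob begin

lemma QQ_cont_t: assumes t: "0 \<le> t" and r: "0 \<le> \<rho>" and d: "\<delta> > 0"
  shows "\<exists>d>0. \<forall>y. 0 \<le> y \<longrightarrow> \<bar>y - \<rho>\<bar> < d \<longrightarrow> \<bar>QQ t y - QQ t \<rho>\<bar> < \<delta>"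
proof -
  obtain d where d: "d > 0" "\<And>x'. x' \<in> DD \<Longrightarrow> dist x' (t,\<rho>) < d \<Longrightarrow>
      dist ((\<lambda>(t,\<rho>). QQ t \<rho>) x') ((\<lambda>(t,\<rho>). QQ t \<rho>) (t,\<rho>)) < \<delta>"
    using QQ_cont[unfolded continuous_on_iff] t r d by fastforce
  show ?thesis
  proof (intro exI[of _ d] conjI allI impI)
    fix y assume y: "0 \<le> y" "\<bar>y - \<rho>\<bar> < d"
    have "dist (t,y) (t,\<rho>) = \<bar>y - \<rho>\<bar>" by (simp add: dist_Pair_Pair dist_real_def)
    then show "\<bar>QQ t y - QQ t \<rho>\<bar> < \<delta>" using d(2)[of "(t,y)"] y t by (simp add: dist_real_def)
  qed (use d in simp)
qed

lemma G_deriv: assumes t: "0 \<le> t" and r: "0 < \<rho>"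
  shows "((\<lambda>r. FF t (QQ t r)) has_real_derivative uh t \<rho>) (at \<rho>)"
proof -
  have "((\<lambda>r. FF t (QQ t r)) has_derivative (\<lambda>h. uh t \<rho> * h)) (at \<rho> within {0..})"
    unfolding has_derivative_within_alt
  proof (intro conjI allI impI)
    show "bounded_linear ((*) (uh t \<rho>))" by (rule bounded_linear_mult_right)
    fix e :: real assume e: "e > 0"
    define s where "s = QQ t \<rho>"
    have s: "0 \<le> s" using QQ_props(2)[OF t] r s_def by simp
    obtain \<delta> where \<delta>: "\<delta> > 0" and H: "\<And>s'. 0 \<le> s' \<Longrightarrow> \<bar>s' - s\<bar> < \<delta> \<Longrightarrow>
        \<bar>FF t s' - FF t s - cc t (w s) * (PP t s' - PP t s)\<bar> \<le> e * \<bar>PP t s' - PP t s\<bar>"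
      using KE[OF t s e] by blast
    obtain d where d: "d > 0" "\<And>y. 0 \<le> y \<Longrightarrow> \<bar>y - \<rho>\<bar> < d \<Longrightarrow> \<bar>QQ t y - QQ t \<rho>\<bar> < \<delta>"
      using QQ_cont_t[OF t _ \<delta>] r by (meson less_imp_le)
    show "\<exists>d>0. \<forall>y\<in>{0..}. norm (y - \<rho>) < d \<longrightarrow>
      norm (FF t (QQ t y) - FF t (QQ t \<rho>) - uh t \<rho> * (y - \<rho>)) \<le> e * norm (y - \<rho>)"
    proof (intro exI[of _ d] conjI ballI impI)
      fix y assume y: "y \<in> {0..}" "norm (y - \<rho>) < d"
      have y0: "0 \<le> y" using y by simp
      have q: "\<bar>QQ t y - s\<bar> < \<delta>" using d(2)[OF y0] y s_def by simp
      have "\<bar>FF t (QQ t y) - FF t s - cc t (w s) * (PP t (QQ t y) - PP t s)\<bar> \<le> e * \<bar>PP t (QQ t y) - PP t s\<bar>"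
        using H[OF QQ_props(2)[OF t y0] q] .
      moreover have "PP t (QQ t y) = y" "PP t s = \<rho>" using QQ_props(1)[OF t] y0 r s_def by auto
      ultimately show "norm (FF t (QQ t y) - FF t (QQ t \<rho>) - uh t \<rho> * (y - \<rho>)) \<le> e * norm (y - \<rho>)"
        by (simp add: uh_def s_def)
    qed (use d in simp)
  qed
  moreover have "at \<rho> within {0..} = at \<rho>" by (rule at_within_interior) (use r in auto)
  ultimately show ?thesis by (simp add: has_field_derivative_def)
qed

definition fh :: "real \<Rightarrow> real \<Rightarrow> real" where "fh t \<rho> = integral {0..\<rho>} (uh t)"

lemma uh_cont_r: "0 \<le> t \<Longrightarrow> continuous_on {0..} (uh t)"
proof -
  assume t: "0 \<le> t"
  have "continuous_on {0..} (\<lambda>r. (\<lambda>(t,\<rho>). uh t \<rho>) (t, r))"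
    by (rule continuous_on_compose2[OF uh_cont]) (use t in \<open>auto intro: continuous_intros\<close>)
  then show ?thesis by simp
qed

lemma FFQQ_cont_r: "0 \<le> t \<Longrightarrow> continuous_on {0..} (\<lambda>r. FF t (QQ t r))"
proof -
  assume t: "0 \<le> t"
  have "continuous_on {0..} (\<lambda>r. (\<lambda>(t,\<rho>). FF t (QQ t \<rho>)) (t, r))"
    by (rule continuous_on_compose2[OF FFQQ_cont]) (use t in \<open>auto intro: continuous_intros\<close>)
  then show ?thesis by simp
qed

lemma fh_eq: assumes t: "0 \<le> t" and r: "0 \<le> \<rho>" shows "fh t \<rho> = FF t (QQ t \<rho>)"
proof -
  have "(uh t has_integral (FF t (QQ t \<rho>) - FF t (QQ t 0))) {0..\<rho>}"
  proof (rule fundamental_theorem_of_calculus_interior[OF r])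
    show "continuous_on {0..\<rho>} (\<lambda>r. FF t (QQ t r))"
      by (rule continuous_on_subset[OF FFQQ_cont_r[OF t]]) auto
    fix x assume "x \<in> {0<..<\<rho>}"
    then have "0 < x" by simp
    then show "((\<lambda>r. FF t (QQ t r)) has_vector_derivative uh t x) (at x)"
      using G_deriv[OF t] by (simp add: has_real_derivative_iff_has_vector_derivative)
  qed
  then show ?thesis unfolding fh_def using t by (simp add: integral_unique FF_def)
qed

lemma fh_cont: "continuous_on DD (\<lambda>(t,\<rho>). fh t \<rho>)"
  using FFQQ_cont by (rule continuous_on_eq) (auto simp: fh_eq)

lemma fh_deriv_r: assumes t: "0 \<le> t" and r: "0 < \<rho>"
  shows "(fh t has_real_derivative uh t \<rho>) (at \<rho>)"
proof -
  have "(fh t has_real_derivative uh t \<rho>) (at \<rho> within {0..\<rho>+1})"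
    unfolding fh_def
    by (rule integral_has_real_derivative) (use r continuous_on_subset[OF uh_cont_r[OF t]] in auto)
  moreover have "at \<rho> within {0..\<rho>+1} = at \<rho>" by (rule at_within_interior) (use r in auto)
  ultimately show ?thesis by simp
qed

lemma fh_mvt: assumes t: "0 \<le> t" and a: "0 < a" and b: "0 < b"
  shows "\<exists>\<xi>. min a b \<le> \<xi> \<and> \<xi> \<le> max a b \<and> fh t b - fh t a = uh t \<xi> * (b - a)"
proof -
  have gen: "\<exists>\<xi>. a1 \<le> \<xi> \<and> \<xi> \<le> b1 \<and> fh t b1 - fh t a1 = uh t \<xi> * (b1 - a1)" if "0 < a1" "a1 < b1" for a1 b1
  proof -
    have "\<exists>z. a1 < z \<and> z < b1 \<and> fh t b1 - fh t a1 = (b1 - a1) * uh t z"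
      by (rule MVT2[OF that(2)]) (use that fh_deriv_r[OF t] in auto)
    then obtain z where "a1 < z" "z < b1" "fh t b1 - fh t a1 = (b1 - a1) * uh t z" by blast
    then show ?thesis by (intro exI[of _ z]) (auto simp: mult.commute)
  qed
  consider "a < b" | "a = b" | "b < a" by linarith
  then show ?thesis
  proof cases
    case 1 then show ?thesis using gen[OF a] by auto
  next
    case 2 then show ?thesis by auto
  next
    case 3
    obtain \<xi> where "b \<le> \<xi>" "\<xi> \<le> a" "fh t a - fh t b = uh t \<xi> * (a - b)" using gen[OF b 3] by blast
    then show ?thesis using 3 by (intro exI[of _ \<xi>]) (auto simp: algebra_simps)
  qed
qed

end



context mprob begin

lemma FF_tderiv: assumes s: "0 \<le> s" and t0: "0 < t0"
  shows "((\<lambda>t. FF t s) has_real_derivative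
     mm s * ((\<alpha> - 1) / \<alpha> * (1 + \<alpha> * t0 * w s powr \<alpha>) powr ((\<alpha> - 1) / \<alpha> - of_nat 1) * (\<alpha> * w s powr \<alpha>))) (at t0)"
proof -
  have d1: "((\<lambda>t. 1 + \<alpha> * t * w s powr \<alpha>) has_real_derivative \<alpha> * w s powr \<alpha>) (at t0)"
    by (auto intro!: derivative_eq_intros)
  have B: "1 + \<alpha> * t0 * w s powr \<alpha> > 0" using base_pos[of t0 "w s"] t0 w_nonneg by simp
  show ?thesis unfolding FF_def AA_def
    by (intro DERIV_cmult DERIV_fun_powr[OF d1 B])
qed

lemma D_alg: assumes t0: "0 \<le> t0" and v: "0 \<le> v" and mnn: "0 \<le> mv"
  shows "mv * ((\<alpha> - 1) / \<alpha> * (1 + \<alpha> * t0 * v powr \<alpha>) powr ((\<alpha> - 1) / \<alpha> - of_nat 1) * (\<alpha> * v powr \<alpha>))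
     - \<alpha> * (mv * yp v) * cc t0 v = - (cc t0 v powr \<alpha>) * (mv * AA t0 v)"
proof -
  define B where "B = 1 + \<alpha> * t0 * v powr \<alpha>"
  define E where "E = B powr (- 1 / \<alpha>)"
  have B: "B > 0" using base_pos[OF t0 v] B_def by simp
  have r1: "(\<alpha> - 1) / \<alpha> - of_nat 1 = - 1 / \<alpha>" using a_pos by (simp add: field_simps)
  have c: "cc t0 v = v * E" unfolding cc_def B_def E_def by simp
  have A: "AA t0 v = B * E" using AA_split[OF t0 v] B_def E_def by simp
  have Ea: "E powr \<alpha> = inverse B"
  proof -
    have "E powr \<alpha> = B powr (- 1 / \<alpha> * \<alpha>)" unfolding E_def by (rule powr_powr)
    also have "- 1 / \<alpha> * \<alpha> = - 1" using a_pos by simp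
    finally show ?thesis using B by (simp add: powr_minus)
  qed
  have ca: "cc t0 v powr \<alpha> = v powr \<alpha> * inverse B" unfolding c powr_mult Ea ..
  have vy: "v * yp v = v powr \<alpha>" by (rule v_yp[OF v])
  have X1: "mv * ((\<alpha> - 1) / \<alpha> * B powr ((\<alpha> - 1) / \<alpha> - of_nat 1) * (\<alpha> * v powr \<alpha>))
      = mv * (\<alpha> - 1) * E * v powr \<alpha>" unfolding r1 E_def[symmetric] using a_pos by (simp add: field_simps)
  have "\<alpha> * (mv * yp v) * cc t0 v = \<alpha> * mv * E * (v * yp v)" unfolding c by (simp add: algebra_simps)
  then have X2: "\<alpha> * (mv * yp v) * cc t0 v = \<alpha> * mv * E * v powr \<alpha>" unfolding vy .
  have "- (cc t0 v powr \<alpha>) * (mv * AA t0 v) = - mv * E * v powr \<alpha> * (inverse B * B)"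
    unfolding ca A by (simp add: algebra_simps)
  then have X3: "- (cc t0 v powr \<alpha>) * (mv * AA t0 v) = - mv * E * v powr \<alpha>" using B by simp
  have "mv * (\<alpha> - 1) * E * v powr \<alpha> - \<alpha> * mv * E * v powr \<alpha> = - mv * E * v powr \<alpha>"
    by (simp add: algebra_simps)
  then show ?thesis unfolding B_def[symmetric] X1 X2 X3 .
qed

lemma fh_tderiv: assumes t0: "0 < t0" and r0: "0 < \<rho>0"
  shows "((\<lambda>t. fh t \<rho>0) has_real_derivative (- (uh t0 \<rho>0 powr \<alpha>) * fh t0 \<rho>0)) (at t0)"
proof -
  define s0 where "s0 = QQ t0 \<rho>0"
  have s0: "0 < s0" using QQ_pos[of t0 \<rho>0] t0 r0 s0_def by simp
  define K where "K = KK s0"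
  have K: "0 \<le> K" using KK_nonneg s0 K_def by simp
  have aK: "0 \<le> \<alpha> * K" using K a_pos by simp
  define v where "v = w s0"
  define u0 where "u0 = uh t0 \<rho>0"
  have u0: "u0 = cc t0 v" unfolding u0_def uh_def v_def s0_def ..
  define D1 where "D1 = mm s0 * ((\<alpha> - 1) / \<alpha> * (1 + \<alpha> * t0 * w s0 powr \<alpha>) powr ((\<alpha> - 1) / \<alpha> - of_nat 1) * (\<alpha> * w s0 powr \<alpha>))"
  have fh0: "fh t0 \<rho>0 = FF t0 s0" using fh_eq[of t0 \<rho>0] t0 r0 s0_def by simp
  have PP0: "PP t0 s0 = \<rho>0" using QQ_props(1)[of t0 \<rho>0] t0 r0 s0_def by simp
  have Deq: "D1 - \<alpha> * K * u0 = - (uh t0 \<rho>0 powr \<alpha>) * fh t0 \<rho>0"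
    unfolding D1_def K_def KK_def u0 fh0 FF_def u0_def[symmetric] v_def[symmetric]
    using D_alg[of t0 v "mm s0"] t0 w_nonneg mm_nonneg s0 v_def u0 by simp
  have dFF: "((\<lambda>t. FF t s0) has_derivative (\<lambda>h. D1 * h)) (at t0)"
    using FF_tderiv[of s0 t0] s0 t0 D1_def by (simp add: has_field_derivative_def)
  have "((\<lambda>t. fh t \<rho>0) has_derivative (\<lambda>h. (D1 - \<alpha> * K * u0) * h)) (at t0 within UNIV)"
    unfolding has_derivative_within_alt
  proof (intro conjI allI impI)
    show "bounded_linear ((*) (D1 - \<alpha> * K * u0))" by (rule bounded_linear_mult_right)
    fix e :: real assume e: "e > 0"
    obtain d1 where d1: "d1 > 0" "\<And>t. norm (t - t0) < d1 \<Longrightarrow>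
        norm (FF t s0 - FF t0 s0 - D1 * (t - t0)) \<le> (e/2) * norm (t - t0)"
      using dFF[unfolded has_derivative_within_alt] e by (metis UNIV_I half_gt_zero)
    define e2 where "e2 = e / (2 * (\<alpha> * K + 1))"
    have e2: "e2 > 0" using e aK e2_def by simp
    obtain d2 where d2: "d2 > 0" "\<And>x'. x' \<in> DD \<Longrightarrow> dist x' (t0,\<rho>0) < d2 \<Longrightarrow>
        dist ((\<lambda>(t,\<rho>). uh t \<rho>) x') ((\<lambda>(t,\<rho>). uh t \<rho>) (t0,\<rho>0)) < e2"
      using uh_cont[unfolded continuous_on_iff] t0 r0 e2
      by (metis (no_types, lifting) SigmaI atLeast_iff less_imp_le)
    define d where "d = min d1 (min t0 (d2 / (1 + \<alpha> * K)))"
    have d: "d > 0" unfolding d_def using d1 d2 t0 aK by simp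
    show "\<exists>d>0. \<forall>t\<in>UNIV. norm (t - t0) < d \<longrightarrow>
       norm (fh t \<rho>0 - fh t0 \<rho>0 - (D1 - \<alpha> * K * u0) * (t - t0)) \<le> e * norm (t - t0)"
    proof (intro exI[of _ d] conjI ballI impI)
      fix t assume td: "norm (t - t0) < d"
      then have tt: "\<bar>t - t0\<bar> < d1" "\<bar>t - t0\<bar> < t0" "\<bar>t - t0\<bar> < d2 / (1 + \<alpha> * K)"
        unfolding d_def by auto
      have tpos: "0 < t" using tt(2) by linarith
      define b where "b = PP t s0"
      have b: "0 < b" using PP_ge[of t s0] tpos s0 b_def by simp
      have bd: "b - \<rho>0 = \<alpha> * K * (t - t0)" unfolding b_def PP0[symmetric] PP_KK K_def
        by (simp add: algebra_simps)
      have fhb: "fh t b = FF t s0" using fh_eq[of t b] tpos b QQ_PP[of t s0] s0 b_def by simp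
      obtain \<xi> where \<xi>: "min \<rho>0 b \<le> \<xi>" "\<xi> \<le> max \<rho>0 b" "fh t b - fh t \<rho>0 = uh t \<xi> * (b - \<rho>0)"
        using fh_mvt[of t \<rho>0 b] tpos r0 b by auto
      have xi0: "0 < \<xi>" using \<xi>(1) r0 b by simp
      have xid: "\<bar>\<xi> - \<rho>0\<bar> \<le> \<alpha> * K * \<bar>t - t0\<bar>"
      proof -
        have "\<bar>\<xi> - \<rho>0\<bar> \<le> \<bar>b - \<rho>0\<bar>" using \<xi>(1,2) by (simp add: abs_if min_def max_def split: if_splits)
        also have "\<dots> = \<alpha> * K * \<bar>t - t0\<bar>" unfolding bd using aK by (metis abs_mult abs_of_nonneg)
        finally show ?thesis .
      qed
      have "dist (t,\<xi>) (t0,\<rho>0) \<le> \<bar>t - t0\<bar> + \<bar>\<xi> - \<rho>0\<bar>"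
        unfolding dist_Pair_Pair dist_real_def using sqrt_sum_squares_le_sum_abs[of "t - t0" "\<xi> - \<rho>0"] by simp
      also have "\<dots> \<le> (1 + \<alpha> * K) * \<bar>t - t0\<bar>" using xid by (simp add: algebra_simps)
      also have "\<dots> < d2" using tt(3) aK by (simp add: field_simps)
      finally have "dist (t,\<xi>) (t0,\<rho>0) < d2" .
      then have ux: "\<bar>uh t \<xi> - u0\<bar> < e2" using d2(2)[of "(t,\<xi>)"] tpos xi0 u0_def
        by (simp add: dist_real_def)
      have split: "fh t \<rho>0 - fh t0 \<rho>0 - (D1 - \<alpha> * K * u0) * (t - t0)
          = (FF t s0 - FF t0 s0 - D1 * (t - t0)) - (\<alpha> * K * (t - t0)) * (uh t \<xi> - u0)"
        using \<xi>(3) fhb fh0 bd by (simp add: algebra_simps)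
      have A: "\<bar>FF t s0 - FF t0 s0 - D1 * (t - t0)\<bar> \<le> (e/2) * \<bar>t - t0\<bar>" using d1(2)[of t] tt(1) by simp
      have "\<bar>(\<alpha> * K * (t - t0)) * (uh t \<xi> - u0)\<bar> = (\<alpha> * K) * \<bar>t - t0\<bar> * \<bar>uh t \<xi> - u0\<bar>"
        using aK by (metis abs_mult abs_of_nonneg)
      also have "\<dots> \<le> (\<alpha> * K) * \<bar>t - t0\<bar> * e2"
        using aK ux by (intro mult_left_mono) auto
      also have "\<dots> \<le> (e/2) * \<bar>t - t0\<bar>"
      proof -
        have "\<alpha> * K * e2 \<le> e / 2" unfolding e2_def using aK e by (simp add: field_simps)
        then show ?thesis by (metis abs_ge_zero mult.commute mult.left_commute mult_right_mono)
      qed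
      finally have B: "\<bar>(\<alpha> * K * (t - t0)) * (uh t \<xi> - u0)\<bar> \<le> (e/2) * \<bar>t - t0\<bar>" .
      show "norm (fh t \<rho>0 - fh t0 \<rho>0 - (D1 - \<alpha> * K * u0) * (t - t0)) \<le> e * norm (t - t0)"
        unfolding split real_norm_def using A B abs_triangle_ineq4[of "FF t s0 - FF t0 s0 - D1 * (t - t0)" "\<alpha> * K * (t - t0) * (uh t \<xi> - u0)"]
        by linarith
    qed (use d in simp)
  qed
  then have "((\<lambda>t. fh t \<rho>0) has_derivative (*) (D1 - \<alpha> * K * u0)) (at t0)" by simp
  then show ?thesis unfolding Deq has_field_derivative_def .
qed

end



lemma sup_dir:
  fixes \<phi> :: "real \<times> real \<Rightarrow> real"
  assumes p: "p \<in> frechet_superdiff \<phi> x" and ab: "(a,b) \<noteq> (0,0)" and e: "e > 0"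
  shows "\<exists>\<delta>>0. \<forall>h. 0 < h \<longrightarrow> h < \<delta> \<longrightarrow>
     \<phi> (fst x + h*a, snd x + h*b) - \<phi> x - h * (fst p * a + snd p * b) \<le> e * h"
proof -
  define n where "n = norm (a,b)"
  have "(a,b) \<noteq> 0" using ab by (simp add: zero_prod_def)
  then have n: "n > 0" using n_def by simp
  have "Limsup (at x) (\<lambda>y. ereal ((\<phi> y - \<phi> x - pair_inner p (y - x)) / norm (y - x))) < ereal (e/n)"
    using p e n unfolding frechet_superdiff_def by (auto intro: le_less_trans)
  from Limsup_lessD[OF this] obtain d where d: "d > 0"
    "\<And>y. y \<noteq> x \<Longrightarrow> dist y x < d \<Longrightarrow> (\<phi> y - \<phi> x - pair_inner p (y - x)) / norm (y - x) < e/n"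
    unfolding eventually_at by auto
  show ?thesis
  proof (intro exI[of _ "d/n"] conjI allI impI)
    show "0 < d / n" using d n by simp
    fix h assume h: "0 < h" "h < d / n"
    define y where "y = (fst x + h*a, snd x + h*b)"
    have yx: "y - x = h *\<^sub>R (a,b)" unfolding y_def by (cases x) simp
    have ny: "norm (y - x) = h * n" unfolding yx n_def norm_scaleR using h by simp
    have "y \<noteq> x" using ny h n by auto
    moreover have "dist y x < d" using ny h n by (simp add: dist_norm field_simps)
    ultimately have "(\<phi> y - \<phi> x - pair_inner p (y - x)) / norm (y - x) < e/n" by (rule d(2))
    then have "(\<phi> y - \<phi> x - pair_inner p (y - x)) / (h * n) < e/n" unfolding ny .
    moreover have "pair_inner p (y - x) = h * (fst p * a + snd p * b)"
      unfolding yx pair_inner_def by (simp add: algebra_simps)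
    ultimately have "(\<phi> y - \<phi> x - h * (fst p * a + snd p * b)) / (h * n) < e / n" by simp
    then have "\<phi> y - \<phi> x - h * (fst p * a + snd p * b) < e / n * (h * n)"
      using h n by (simp add: divide_less_eq)
    also have "e / n * (h * n) = e * h" using n by simp
    finally show "\<phi> (fst x + h*a, snd x + h*b) - \<phi> x - h * (fst p * a + snd p * b) \<le> e * h"
      unfolding y_def by simp
  qed
qed

lemma sub_dir:
  fixes \<phi> :: "real \<times> real \<Rightarrow> real"
  assumes p: "p \<in> frechet_subdiff \<phi> x" and ab: "(a,b) \<noteq> (0,0)" and e: "e > 0"
  shows "\<exists>\<delta>>0. \<forall>h. 0 < h \<longrightarrow> h < \<delta> \<longrightarrow>
     \<phi> (fst x + h*a, snd x + h*b) - \<phi> x - h * (fst p * a + snd p * b) \<ge> - e * h"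
proof -
  define n where "n = norm (a,b)"
  have "(a,b) \<noteq> 0" using ab by (simp add: zero_prod_def)
  then have n: "n > 0" using n_def by simp
  have l0: "0 \<le> Liminf (at x) (\<lambda>y. ereal ((\<phi> y - \<phi> x - pair_inner p (y - x)) / norm (y - x)))"
    using p unfolding frechet_subdiff_def by simp
  have "ereal (- e/n) < 0" using e n by simp
  then have "ereal (- e/n) < Liminf (at x) (\<lambda>y. ereal ((\<phi> y - \<phi> x - pair_inner p (y - x)) / norm (y - x)))"
    using l0 by (rule less_le_trans)
  from less_LiminfD[OF this] obtain d where d: "d > 0"
    "\<And>y. y \<noteq> x \<Longrightarrow> dist y x < d \<Longrightarrow> (\<phi> y - \<phi> x - pair_inner p (y - x)) / norm (y - x) > - e/n"
    unfolding eventually_at by auto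
  show ?thesis
  proof (intro exI[of _ "d/n"] conjI allI impI)
    show "0 < d / n" using d n by simp
    fix h assume h: "0 < h" "h < d / n"
    define y where "y = (fst x + h*a, snd x + h*b)"
    have yx: "y - x = h *\<^sub>R (a,b)" unfolding y_def by (cases x) simp
    have ny: "norm (y - x) = h * n" unfolding yx n_def norm_scaleR using h by simp
    have "y \<noteq> x" using ny h n by auto
    moreover have "dist y x < d" using ny h n by (simp add: dist_norm field_simps)
    ultimately have "(\<phi> y - \<phi> x - pair_inner p (y - x)) / norm (y - x) > - e/n" by (rule d(2))
    then have "(\<phi> y - \<phi> x - pair_inner p (y - x)) / (h * n) > - e/n" unfolding ny .
    moreover have "pair_inner p (y - x) = h * (fst p * a + snd p * b)"
      unfolding yx pair_inner_def by (simp add: algebra_simps)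
    ultimately have "(\<phi> y - \<phi> x - h * (fst p * a + snd p * b)) / (h * n) > - e / n" by simp
    then have "\<phi> y - \<phi> x - h * (fst p * a + snd p * b) > - e / n * (h * n)"
      using h n by (simp add: less_divide_eq)
    also have "- e / n * (h * n) = - e * h" using n by simp
    finally show "\<phi> (fst x + h*a, snd x + h*b) - \<phi> x - h * (fst p * a + snd p * b) \<ge> - e * h"
      unfolding y_def by simp
  qed
qed

definition Lfun :: "real \<Rightarrow> real \<Rightarrow> real \<Rightarrow> real" where
  "Lfun F0 Mc D = (if F0 < Mc then D else if Mc < F0 then 0 else min D 0)"

lemma min_lip: "\<bar>min (u::real) Mc - min v Mc\<bar> \<le> \<bar>u - v\<bar>" by (simp add: min_def abs_if)

lemma dir_est:
  fixes \<phi> f :: "real \<times> real \<Rightarrow> real"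
  assumes df: "(f has_derivative (\<lambda>h. g1 * fst h + g2 * snd h)) (at x)"
    and near: "r > 0" "\<And>y. dist y x < r \<Longrightarrow> \<phi> y = min (f y) Mc"
    and e: "e > 0"
  shows "\<exists>\<delta>>0. \<forall>h. 0 < h \<longrightarrow> h < \<delta> \<longrightarrow>
     \<bar>\<phi> (fst x + h*a, snd x + h*b) - \<phi> x - h * Lfun (f x) Mc (g1*a + g2*b)\<bar> \<le> e * h"
proof -
  define n where "n = norm (a,b)"
  define D where "D = g1*a + g2*b"
  define L where "L = Lfun (f x) Mc D"
  have n: "n \<ge> 0" using n_def by simp
  have en: "e / (n+1) > 0" using e n by simp
  obtain d1 where d1': "d1 > 0" "\<forall>y\<in>UNIV. norm (y - x) < d1 \<longrightarrow>
      norm (f y - f x - (g1 * fst (y - x) + g2 * snd (y - x))) \<le> (e / (n+1)) * norm (y - x)"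
    using df[unfolded has_derivative_within_alt] en by blast
  have d1: "d1 > 0" "\<And>y. norm (y - x) < d1 \<Longrightarrow>
      norm (f y - f x - (g1 * fst (y - x) + g2 * snd (y - x))) \<le> (e / (n+1)) * norm (y - x)"
    using d1' by auto
  obtain h0 where h0: "h0 > 0" "\<And>h. 0 < h \<Longrightarrow> h < h0 \<Longrightarrow> min (f x + h * D) Mc - min (f x) Mc = h * L"
  proof (cases "f x < Mc")
    case True
    show ?thesis
    proof (rule that[of "(Mc - f x) / (\<bar>D\<bar> + 1)"])
      show "0 < (Mc - f x) / (\<bar>D\<bar> + 1)" using True by simp
      fix h assume h: "0 < h" "h < (Mc - f x) / (\<bar>D\<bar> + 1)"
      then have "h * (\<bar>D\<bar> + 1) < Mc - f x" by (simp add: field_simps)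
      moreover have "h * D \<le> h * (\<bar>D\<bar> + 1)" using h by (intro mult_left_mono) auto
      ultimately have "f x + h * D < Mc" by linarith
      then show "min (f x + h * D) Mc - min (f x) Mc = h * L" using True L_def Lfun_def by simp
    qed
  next
    case False
    show ?thesis
    proof (cases "Mc < f x")
      case True
      show ?thesis
      proof (rule that[of "(f x - Mc) / (\<bar>D\<bar> + 1)"])
        show "0 < (f x - Mc) / (\<bar>D\<bar> + 1)" using True by simp
        fix h assume h: "0 < h" "h < (f x - Mc) / (\<bar>D\<bar> + 1)"
        then have "h * (\<bar>D\<bar> + 1) < f x - Mc" by (simp add: field_simps)
        moreover have "h * (- D) \<le> h * (\<bar>D\<bar> + 1)" using h by (intro mult_left_mono) auto
        ultimately have "f x + h * D > Mc" by linarith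
        then show "min (f x + h * D) Mc - min (f x) Mc = h * L" using True False L_def Lfun_def by simp
      qed
    next
      case F2: False
      then have eq: "f x = Mc" using False by simp
      show ?thesis
      proof (rule that[of 1])
        fix h :: real assume h: "0 < h"
        have "min (Mc + h * D) Mc - Mc = h * min D 0" using h by (simp add: min_def mult_le_0_iff)
        then show "min (f x + h * D) Mc - min (f x) Mc = h * L" using eq L_def Lfun_def by simp
      qed simp
    qed
  qed
  define \<delta> where "\<delta> = min h0 (min (d1 / (n+1)) (r / (n+1)))"
  show ?thesis unfolding D_def[symmetric] L_def[symmetric]
  proof (intro exI[of _ \<delta>] conjI allI impI)
    show "0 < \<delta>" unfolding \<delta>_def using h0 d1 near n by simp
    fix h assume h: "0 < h" "h < \<delta>"
    define y where "y = (fst x + h*a, snd x + h*b)"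
    have yx: "y - x = h *\<^sub>R (a,b)" unfolding y_def by (cases x) simp
    have ny: "norm (y - x) = h * n" unfolding yx n_def norm_scaleR using h by simp
    have hn: "h * n \<le> h * (n + 1)" using h by simp
    have n1: "n + 1 > 0" using n by simp
    have "h < d1 / (n+1)" "h < r / (n+1)" "h < h0" using h unfolding \<delta>_def by auto
    then have "h * (n+1) < d1" "h * (n+1) < r" using n1 by (simp_all add: less_divide_eq)
    then have yd: "norm (y - x) < d1" "dist y x < r" using ny hn by (auto simp: dist_norm)
    have fy0: "norm (f y - f x - (g1 * fst (y - x) + g2 * snd (y - x))) \<le> (e/(n+1)) * (h*n)"
      using d1(2)[OF yd(1)] unfolding ny .
    have "g1 * fst (y - x) + g2 * snd (y - x) = h * D" unfolding yx D_def by (simp add: algebra_simps)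
    then have fy: "\<bar>f y - f x - h * D\<bar> \<le> (e / (n+1)) * (h * n)" using fy0 by simp
    also have "\<dots> \<le> (e / (n+1)) * (h * (n + 1))" using e n hn h by (intro mult_left_mono) auto
    also have "\<dots> = e * h" using n by simp
    finally have fy: "\<bar>f y - f x - h * D\<bar> \<le> e * h" .
    have "\<phi> y = min (f y) Mc" using near(2)[OF yd(2)] .
    moreover have "\<phi> x = min (f x) Mc" using near by simp
    ultimately have "\<phi> y - \<phi> x - h * L = min (f y) Mc - min (f x + h * D) Mc"
      using h0(2)[of h] h \<open>h < h0\<close> by simp
    then have "\<bar>\<phi> y - \<phi> x - h * L\<bar> \<le> \<bar>f y - (f x + h * D)\<bar>" using min_lip[of "f y" Mc "f x + h * D"] by simp
    then show "\<bar>\<phi> (fst x + h * a, snd x + h * b) - \<phi> x - h * L\<bar> \<le> e * h"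
      using fy unfolding y_def by simp
  qed
qed




lemma sup_L:
  fixes \<phi> f :: "real \<times> real \<Rightarrow> real"
  assumes p: "p \<in> frechet_superdiff \<phi> x"
    and df: "(f has_derivative (\<lambda>h. g1 * fst h + g2 * snd h)) (at x)"
    and near: "r > 0" "\<And>y. dist y x < r \<Longrightarrow> \<phi> y = min (f y) Mc"
  shows "Lfun (f x) Mc (g1*a + g2*b) \<le> fst p * a + snd p * b"
proof (cases "(a,b) = (0,0)")
  case True then show ?thesis by (simp add: Lfun_def)
next
  case False
  define Lv where "Lv = Lfun (f x) Mc (g1*a + g2*b)"
  define P where "P = fst p * a + snd p * b"
  show ?thesis unfolding Lv_def[symmetric] P_def[symmetric]
  proof (rule ccontr)
    assume "\<not> Lv \<le> P"
    then have lp: "Lv > P" by simp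
    define e where "e = (Lv - P) / 3"
    have e: "e > 0" using lp e_def by simp
    obtain d1 where d1: "d1 > 0" "\<And>h. 0 < h \<Longrightarrow> h < d1 \<Longrightarrow>
        \<phi> (fst x + h*a, snd x + h*b) - \<phi> x - h * P \<le> e * h"
      using sup_dir[OF p False e] P_def by blast
    obtain d2 where d2: "d2 > 0" "\<And>h. 0 < h \<Longrightarrow> h < d2 \<Longrightarrow>
        \<bar>\<phi> (fst x + h*a, snd x + h*b) - \<phi> x - h * Lv\<bar> \<le> e * h"
      using dir_est[OF df near e, of a b] Lv_def by blast
    define h where "h = min d1 d2 / 2"
    have h: "0 < h" "h < d1" "h < d2" using d1 d2 h_def by auto
    have A: "\<phi> (fst x + h*a, snd x + h*b) - \<phi> x - h * P \<le> e * h" using d1(2) h by blast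
    have B: "\<bar>\<phi> (fst x + h*a, snd x + h*b) - \<phi> x - h * Lv\<bar> \<le> e * h" using d2(2) h by blast
    have C: "h * Lv - h * P = 3 * (e * h)" unfolding e_def by (simp add: algebra_simps)
    have "e * h > 0" using e h by simp
    then show False using A B C by linarith
  qed
qed

lemma sub_L:
  fixes \<phi> f :: "real \<times> real \<Rightarrow> real"
  assumes p: "p \<in> frechet_subdiff \<phi> x"
    and df: "(f has_derivative (\<lambda>h. g1 * fst h + g2 * snd h)) (at x)"
    and near: "r > 0" "\<And>y. dist y x < r \<Longrightarrow> \<phi> y = min (f y) Mc"
  shows "Lfun (f x) Mc (g1*a + g2*b) \<ge> fst p * a + snd p * b"
proof (cases "(a,b) = (0,0)")
  case True then show ?thesis by (simp add: Lfun_def)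
next
  case False
  define Lv where "Lv = Lfun (f x) Mc (g1*a + g2*b)"
  define P where "P = fst p * a + snd p * b"
  show ?thesis unfolding Lv_def[symmetric] P_def[symmetric]
  proof (rule ccontr)
    assume "\<not> Lv \<ge> P"
    then have lp: "P > Lv" by simp
    define e where "e = (P - Lv) / 3"
    have e: "e > 0" using lp e_def by simp
    obtain d1 where d1: "d1 > 0" "\<And>h. 0 < h \<Longrightarrow> h < d1 \<Longrightarrow>
        \<phi> (fst x + h*a, snd x + h*b) - \<phi> x - h * P \<ge> - e * h"
      using sub_dir[OF p False e] P_def by blast
    obtain d2 where d2: "d2 > 0" "\<And>h. 0 < h \<Longrightarrow> h < d2 \<Longrightarrow>
        \<bar>\<phi> (fst x + h*a, snd x + h*b) - \<phi> x - h * Lv\<bar> \<le> e * h"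
      using dir_est[OF df near e, of a b] Lv_def by blast
    define h where "h = min d1 d2 / 2"
    have h: "0 < h" "h < d1" "h < d2" using d1 d2 h_def by auto
    have A: "\<phi> (fst x + h*a, snd x + h*b) - \<phi> x - h * P \<ge> - e * h" using d1(2) h by blast
    have B: "\<bar>\<phi> (fst x + h*a, snd x + h*b) - \<phi> x - h * Lv\<bar> \<le> e * h" using d2(2) h by blast
    have C: "h * P - h * Lv = 3 * (e * h)" unfolding e_def by (simp add: algebra_simps)
    have "e * h > 0" using e h by simp
    then show False using A B C by linarith
  qed
qed

lemma visc_point:
  fixes \<phi> f :: "real \<times> real \<Rightarrow> real" and \<alpha> :: real
  assumes df: "(f has_derivative (\<lambda>h. g1 * fst h + g2 * snd h)) (at x)"
    and near: "r > 0" "\<And>y. dist y x < r \<Longrightarrow> \<phi> y = min (f y) Mc"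
    and g1: "g1 = - (g2 powr \<alpha>) * f x" and g2: "g2 \<ge> 0" and Mc: "Mc \<ge> 0" and a: "\<alpha> \<ge> 1"
  shows "(\<forall>p\<in>frechet_superdiff \<phi> x. fst p + (max (snd p) 0) powr \<alpha> * \<phi> x \<le> 0) \<and>
         (\<forall>p\<in>frechet_subdiff \<phi> x. fst p + (max (snd p) 0) powr \<alpha> * \<phi> x \<ge> 0)"
proof -
  define F0 where "F0 = f x"
  have phix: "\<phi> x = min F0 Mc" using near F0_def by simp
  have g1': "g1 = - (g2 powr \<alpha>) * F0" using g1 F0_def by simp
  have Lf: "Lfun F0 Mc D = (if F0 < Mc then D else if Mc < F0 then 0 else min D 0)" for D
    by (simp add: Lfun_def)
  have sup: "fst p + (max (snd p) 0) powr \<alpha> * \<phi> x \<le> 0" if p: "p \<in> frechet_superdiff \<phi> x" for p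
  proof -
    obtain p1 p2 where pp: "p = (p1,p2)" by (cases p)
    have S: "Lfun F0 Mc (g1*a + g2*b) \<le> p1 * a + p2 * b" for a b
      using sup_L[OF p df near, of a b] pp F0_def by simp
    consider "F0 < Mc" | "Mc < F0" | "F0 = Mc" by linarith
    then show ?thesis
    proof cases
      case 1
      have "g1 \<le> p1" "- g1 \<le> - p1" "g2 \<le> p2" "- g2 \<le> - p2"
        using S[of 1 0] S[of "-1" 0] S[of 0 1] S[of 0 "-1"] 1 by (auto simp: Lfun_def)
      then have "p1 = g1" "p2 = g2" by auto
      then show ?thesis using pp phix 1 g1' g2 by simp
    next
      case 2
      have "0 \<le> p1" "0 \<le> - p1" "0 \<le> p2" "0 \<le> - p2"
        using S[of 1 0] S[of "-1" 0] S[of 0 1] S[of 0 "-1"] 2 by (auto simp: Lfun_def)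
      then have "p1 = 0" "p2 = 0" by auto
      then show ?thesis using pp a by simp
    next
      case 3
      have F0: "F0 \<ge> 0" using 3 Mc by simp
      have p2a: "0 \<le> p2" using S[of 0 1] 3 g2 by (simp add: Lfun_def)
      have p2b: "p2 \<le> g2" using S[of 0 "-1"] 3 g2 by (simp add: Lfun_def)
      have c1: "0 \<le> p1 * g2 - p2 * g1" using S[of g2 "-g1"] 3 by (simp add: Lfun_def algebra_simps)
      have c2: "0 \<le> - p1 * g2 + p2 * g1" using S[of "-g2" g1] 3 by (simp add: Lfun_def algebra_simps)
      have eq: "p1 * g2 = p2 * g1" using c1 c2 by linarith
      have px: "\<phi> x = F0" using phix 3 by simp
      show ?thesis
      proof (cases "g2 = 0")
        case True
        then have "g1 = 0" using g1' a by simp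
        then have "min 0 0 \<le> p1" "min 0 0 \<le> - p1"
          using S[of 1 0] S[of "-1" 0] 3 True by (auto simp: Lfun_def)
        then have "p1 = 0" by simp
        moreover have "p2 = 0" using p2a p2b True by simp
        ultimately show ?thesis using pp a by simp
      next
        case False
        then have g2p: "g2 > 0" using g2 by simp
        have gg: "g2 powr \<alpha> = g2 * g2 powr (\<alpha> - 1)" using powr_mult_base[of g2 "\<alpha> - 1"] g2 by simp
        have "p1 * g2 = (- p2 * g2 powr (\<alpha> - 1) * F0) * g2" using eq g1' gg by (simp add: algebra_simps)
        then have p1: "p1 = - p2 * g2 powr (\<alpha> - 1) * F0" using g2p mult_right_cancel[of g2 p1] by (metis less_irrefl)
        have pp2: "p2 powr \<alpha> = p2 * p2 powr (\<alpha> - 1)" using powr_mult_base[of p2 "\<alpha> - 1"] p2a by simp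
        have "p2 powr (\<alpha> - 1) \<le> g2 powr (\<alpha> - 1)" using powr_mono2[of "\<alpha> - 1" p2 g2] a p2a p2b by simp
        then have "p2 * p2 powr (\<alpha> - 1) \<le> p2 * g2 powr (\<alpha> - 1)" using p2a by (rule mult_left_mono)
        then have "(p2 powr \<alpha> - p2 * g2 powr (\<alpha> - 1)) * F0 \<le> 0" using pp2 F0
          by (simp add: mult_nonpos_nonneg)
        then show ?thesis using pp px p1 p2a by (simp add: algebra_simps)
      qed
    qed
  qed
  have sub: "fst p + (max (snd p) 0) powr \<alpha> * \<phi> x \<ge> 0" if p: "p \<in> frechet_subdiff \<phi> x" for p
  proof -
    obtain p1 p2 where pp: "p = (p1,p2)" by (cases p)
    have S: "Lfun F0 Mc (g1*a + g2*b) \<ge> p1 * a + p2 * b" for a b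
      using sub_L[OF p df near, of a b] pp F0_def by simp
    consider "F0 < Mc" | "Mc < F0" | "F0 = Mc" by linarith
    then show ?thesis
    proof cases
      case 1
      have "g1 \<ge> p1" "- g1 \<ge> - p1" "g2 \<ge> p2" "- g2 \<ge> - p2"
        using S[of 1 0] S[of "-1" 0] S[of 0 1] S[of 0 "-1"] 1 by (auto simp: Lfun_def)
      then have "p1 = g1" "p2 = g2" by auto
      then show ?thesis using pp phix 1 g1' g2 by simp
    next
      case 2
      have "0 \<ge> p1" "0 \<ge> - p1" "0 \<ge> p2" "0 \<ge> - p2"
        using S[of 1 0] S[of "-1" 0] S[of 0 1] S[of 0 "-1"] 2 by (auto simp: Lfun_def)
      then have "p1 = 0" "p2 = 0" by auto
      then show ?thesis using pp a by simp
    next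
      case 3
      have p2a: "0 \<ge> p2" using S[of 0 1] 3 g2 by (simp add: Lfun_def)
      have p2b: "p2 \<ge> g2" using S[of 0 "-1"] 3 g2 by (simp add: Lfun_def)
      have "g2 = 0" "p2 = 0" using p2a p2b g2 by auto
      then have "g1 = 0" using g1' a by simp
      then have "min 0 0 \<ge> p1" "min 0 0 \<ge> - p1"
        using S[of 1 0] S[of "-1" 0] 3 \<open>g2 = 0\<close> by (auto simp: Lfun_def)
      then have "p1 = 0" by simp
      then show ?thesis using pp a \<open>p2 = 0\<close> by simp
    qed
  qed
  show ?thesis using sup sub by blast
qed




context mprob begin

lemma fh_frechet: assumes t0: "0 < t0" and r0: "0 < \<rho>0"
  shows "((\<lambda>x. fh (fst x) (snd x)) has_derivative
     (\<lambda>h. (- (uh t0 \<rho>0 powr \<alpha>) * fh t0 \<rho>0) * fst h + uh t0 \<rho>0 * snd h)) (at (t0,\<rho>0))"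
proof -
  define X :: "real set" where "X = {0<..}"
  have fx: "((\<lambda>t. fh t \<rho>0) has_derivative (*) (- (uh t0 \<rho>0 powr \<alpha>) * fh t0 \<rho>0)) (at t0 within X)"
    using fh_tderiv[OF t0 r0] by (simp add: has_field_derivative_def has_derivative_at_withinI)
  have fy: "((\<lambda>y. fh x y) has_derivative blinfun_apply (blinfun_mult_right (uh x y))) (at y within X)"
    if "x \<in> X" "y \<in> X" for x y
    using fh_deriv_r[of x y] that unfolding X_def
    by (simp add: has_field_derivative_def has_derivative_at_withinI)
  have cu: "continuous_on (X \<times> X) (\<lambda>p. blinfun_mult_right ((\<lambda>(t,\<rho>). uh t \<rho>) p))"
    by (rule linear_continuous_on_compose[OF continuous_on_subset[OF uh_cont]])
      (auto simp: X_def bounded_linear.linear[OF bounded_linear_blinfun_mult_right])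
  have fyc: "continuous (at (t0, \<rho>0) within X \<times> X) (\<lambda>(x, y). blinfun_mult_right (uh x y))"
    using cu t0 r0 unfolding X_def by (auto simp: continuous_on_eq_continuous_within case_prod_unfold)
  have "((\<lambda>(x, y). fh x y) has_derivative (\<lambda>(tx, ty). (- (uh t0 \<rho>0 powr \<alpha>) * fh t0 \<rho>0) * tx + blinfun_apply (blinfun_mult_right (uh t0 \<rho>0)) ty))
      (at (t0, \<rho>0) within X \<times> X)"
    by (rule has_derivative_partialsI[OF fx fy fyc]) (use r0 in \<open>auto simp: X_def\<close>)
  moreover have "at (t0, \<rho>0) within X \<times> X = at (t0,\<rho>0)"
    by (rule at_within_open) (use t0 r0 in \<open>auto simp: X_def intro: open_Times\<close>)
  ultimately show ?thesis by (simp add: case_prod_unfold)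
qed

lemma fh_mono: assumes t: "0 \<le> t" and "0 \<le> a" "a \<le> b" shows "fh t a \<le> fh t b"
  unfolding fh_def
proof (rule integral_subset_le)
  show "{0..a} \<subseteq> {0..b}" using assms by auto
  show "uh t integrable_on {0..a}" "uh t integrable_on {0..b}"
    using continuous_on_subset[OF uh_cont_r[OF t]] by (auto intro!: integrable_continuous_interval)
  show "\<forall>x\<in>{0..b}. 0 \<le> uh t x" using uh_nonneg[OF t] by simp
qed

lemma fh_t0: "0 \<le> \<rho> \<Longrightarrow> fh 0 \<rho> = mm \<rho>"
proof -
  assume r: "0 \<le> \<rho>"
  have "QQ 0 \<rho> = \<rho>" using QQ_PP[of 0 \<rho>] r by (simp add: PP_def)
  then show ?thesis using fh_eq[of 0 \<rho>] r by (simp add: FF_def AA_t0)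
qed

lemma fh_zero[simp]: "fh t 0 = 0" unfolding fh_def by simp

definition ub :: "real \<Rightarrow> real \<Rightarrow> real" where
  "ub t \<rho> = (if \<rho> \<le> PP t S0 then uh t \<rho> else 0)"

lemma cc_le: "0 \<le> t \<Longrightarrow> 0 \<le> v \<Longrightarrow> cc t v \<le> v"
proof -
  assume t: "0 \<le> t" and v: "0 \<le> v"
  have B: "1 + \<alpha> * t * v powr \<alpha> \<ge> 1" using base_pos[OF t v] .
  have "1 \<le> (1 + \<alpha> * t * v powr \<alpha>) powr (1 / \<alpha>)"
    by (rule ge_one_powr_ge_zero[OF B]) (use a_pos in simp)
  then have "(1 + \<alpha> * t * v powr \<alpha>) powr (- (1 / \<alpha>)) \<le> 1"
    by (simp add: powr_minus_divide divide_le_eq_1)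
  then have "(1 + \<alpha> * t * v powr \<alpha>) powr (- 1 / \<alpha>) \<le> 1" by simp
  then show ?thesis unfolding cc_def using v by (simp add: mult_left_le)
qed

lemma ub_le: assumes t: "0 \<le> t" and r: "0 \<le> \<rho>" shows "0 \<le> ub t \<rho>" "ub t \<rho> \<le> w S0"
proof -
  show "0 \<le> ub t \<rho>" unfolding ub_def using uh_nonneg[OF t] by simp
  show "ub t \<rho> \<le> w S0"
  proof (cases "\<rho> \<le> PP t S0")
    case True
    have "QQ t \<rho> \<le> QQ t (PP t S0)" using QQ_mono[OF t r True] .
    then have q: "QQ t \<rho> \<le> S0" using QQ_PP[OF t] hS0 by simp
    have "uh t \<rho> \<le> w (QQ t \<rho>)" unfolding uh_def using cc_le[OF t w_nonneg] .
    also have "\<dots> \<le> w S0" using w_mono[OF q] .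
    finally show ?thesis using True ub_def by simp
  next
    case False then show ?thesis unfolding ub_def using w_nonneg by simp
  qed
qed

end



lemma nonincr_from_deriv:
  fixes f :: "real \<Rightarrow> real"
  assumes c: "continuous_on {0..} f" and d: "\<And>t. t > 0 \<Longrightarrow> \<exists>l. (f has_real_derivative l) (at t) \<and> l \<le> 0"
    and t: "0 \<le> t"
  shows "f t \<le> f 0"
proof (cases "t = 0")
  case False
  then have tp: "0 < t" using t by simp
  have c': "continuous_on {0..t} f" using continuous_on_subset[OF c] by auto
  have dd: "f differentiable (at x)" if "0 < x" "x < t" for x
    using d[of x] that real_differentiable_def by blast
  obtain l z where lz: "0 < z" "z < t" "(f has_real_derivative l) (at z)" "f t - f 0 = (t - 0) * l"
    using MVT[OF tp c' dd] by blast
  obtain l' where l': "(f has_real_derivative l') (at z)" "l' \<le> 0" using d[of z] lz by blast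
  have "l = l'" using DERIV_unique[OF lz(3) l'(1)] .
  then have "(t - 0) * l \<le> 0" using l' tp by (simp add: mult_nonneg_nonpos)
  then show ?thesis using lz by simp
qed simp

lemma pw_nonneg: "pw x a \<ge> 0" unfolding pw_def by simp

locale mprobS = mprob +
  fixes S :: "real \<Rightarrow> real"
  assumes S_init: "S 0 = S0"
    and S_ode: "\<forall>t\<ge>0. (S has_real_derivative (mm S0 * pw (ub t (S t)) (\<alpha> - 1))) (at t within {0..})"
begin

abbreviation "MM \<equiv> mm S0"

lemma MM_nonneg: "MM \<ge> 0" using mm_nonneg hS0 by simp

lemma S_cont: "continuous_on {0..} S"
proof -
  have "continuous (at t within {0..}) S" if "t \<in> {0..}" for t
  proof -
    have "0 \<le> t" using that by simp
    then have "(S has_real_derivative (MM * pw (ub t (S t)) (\<alpha> - 1))) (at t within {0..})" using S_ode by blast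
    then show ?thesis by (rule DERIV_continuous)
  qed
  then show ?thesis using continuous_on_eq_continuous_within by blast
qed

lemma S_deriv: "0 < t \<Longrightarrow> (S has_real_derivative (MM * pw (ub t (S t)) (\<alpha> - 1))) (at t)"
proof -
  assume t: "0 < t"
  have "at t within {0..} = at t" by (rule at_within_interior) (use t in auto)
  then show ?thesis using S_ode t by (metis less_imp_le)
qed

lemma S_ge: assumes t: "0 \<le> t" shows "S0 \<le> S t"
proof -
  have "(\<lambda>t. - S t) t \<le> (\<lambda>t. - S t) 0"
  proof (rule nonincr_from_deriv[OF _ _ t])
    show "continuous_on {0..} (\<lambda>t. - S t)" using S_cont by (intro continuous_intros)
    fix t :: real assume "0 < t"
    then have "((\<lambda>t. - S t) has_real_derivative - (MM * pw (ub t (S t)) (\<alpha> - 1))) (at t)"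
      using S_deriv by (intro derivative_intros)
    moreover have "- (MM * pw (ub t (S t)) (\<alpha> - 1)) \<le> 0" using MM_nonneg pw_nonneg by simp
    ultimately show "\<exists>l. ((\<lambda>t. - S t) has_real_derivative l) (at t) \<and> l \<le> 0" by blast
  qed
  then show ?thesis using S_init by simp
qed

lemma S_pos: "0 \<le> t \<Longrightarrow> 0 < S t" using S_ge hS0 by (meson less_le_trans)

lemma pw_mono: "0 \<le> x \<Longrightarrow> x \<le> y \<Longrightarrow> pw x (\<alpha> - 1) \<le> pw y (\<alpha> - 1)"
  using yp_mono unfolding yp_def .

lemma S_le: assumes t: "0 \<le> t" shows "S t \<le> PP t S0"
proof -
  have "(\<lambda>t. S t - PP t S0) t \<le> (\<lambda>t. S t - PP t S0) 0"
  proof (rule nonincr_from_deriv[OF _ _ t])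
    show "continuous_on {0..} (\<lambda>t. S t - PP t S0)" unfolding PP_KK using S_cont
      by (intro continuous_intros)
    fix t :: real assume tp: "0 < t"
    have "((\<lambda>t. S t - PP t S0) has_real_derivative (MM * pw (ub t (S t)) (\<alpha> - 1) - \<alpha> * KK S0)) (at t)"
      unfolding PP_KK using S_deriv[OF tp] by (auto intro!: derivative_eq_intros)
    moreover have "MM * pw (ub t (S t)) (\<alpha> - 1) - \<alpha> * KK S0 \<le> 0"
    proof -
      have u: "0 \<le> ub t (S t)" "ub t (S t) \<le> w S0" using ub_le[of t "S t"] tp S_pos[of t] by auto
      have "pw (ub t (S t)) (\<alpha> - 1) \<le> pw (w S0) (\<alpha> - 1)" using pw_mono[OF u] .
      then have "MM * pw (ub t (S t)) (\<alpha> - 1) \<le> KK S0"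
        unfolding KK_def yp_def using MM_nonneg by (simp add: mult_left_mono)
      moreover have "KK S0 \<le> \<alpha> * KK S0" using KK_nonneg[of S0] hS0 ha
        by (simp add: mult_le_cancel_right1)
      ultimately show ?thesis by linarith
    qed
    ultimately show "\<exists>l. ((\<lambda>t. S t - PP t S0) has_real_derivative l) (at t) \<and> l \<le> 0" by blast
  qed
  then show ?thesis using S_init by (simp add: PP_def)
qed

lemma ub_S: "0 \<le> t \<Longrightarrow> ub t (S t) = uh t (S t)"
  using S_le unfolding ub_def by simp

lemma g_cont: "continuous_on {0..} (\<lambda>t. fh t (S t))"
proof -
  have "continuous_on {0..} (\<lambda>t. (t, S t))" using S_cont by (intro continuous_intros)
  moreover have "(\<lambda>t. (t, S t)) ` {0..} \<subseteq> DD" using S_pos by (auto simp: less_imp_le)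
  ultimately have "continuous_on {0..} (\<lambda>t. (\<lambda>(t,\<rho>). fh t \<rho>) (t, S t))"
    using continuous_on_compose2[OF fh_cont] by blast
  then show ?thesis by simp
qed

lemma mass: assumes t: "0 \<le> t" shows "fh t (S t) = MM"
proof -
  define e where "e t = (fh t (S t) - MM)^2" for t
  have "e t \<le> e 0"
  proof (rule nonincr_from_deriv[OF _ _ t])
    show "continuous_on {0..} e" unfolding e_def using g_cont by (intro continuous_intros)
    fix t :: real assume tp: "0 < t"
    define u where "u = uh t (S t)"
    define Dt where "Dt = - (u powr \<alpha>) * fh t (S t)"
    define Sd where "Sd = MM * pw u (\<alpha> - 1)"
    have Sp: "0 < S t" using S_pos tp by simp
    have dS: "(S has_derivative (\<lambda>h. Sd * h)) (at t)"
      using S_deriv[OF tp] ub_S[of t] tp unfolding Sd_def u_def by (simp add: has_field_derivative_def)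
    have dP: "((\<lambda>t. (t, S t)) has_derivative (\<lambda>h. (h, Sd * h))) (at t)"
      by (rule has_derivative_Pair[OF has_derivative_ident dS])
    have df: "((\<lambda>x. fh (fst x) (snd x)) has_derivative (\<lambda>h. Dt * fst h + u * snd h)) (at (t, S t))"
      using fh_frechet[OF tp Sp] unfolding Dt_def u_def .
    have "(((\<lambda>x. fh (fst x) (snd x)) \<circ> (\<lambda>t. (t, S t))) has_derivative
        ((\<lambda>h. Dt * fst h + u * snd h) \<circ> (\<lambda>h. (h, Sd * h)))) (at t)"
      by (rule diff_chain_at[OF dP df])
    moreover have "((\<lambda>h. Dt * fst h + u * snd h) \<circ> (\<lambda>h. (h, Sd * h))) = (*) (Dt + u * Sd)"
      by (auto simp: algebra_simps)
    moreover have "((\<lambda>x. fh (fst x) (snd x)) \<circ> (\<lambda>t. (t, S t))) = (\<lambda>t. fh t (S t))" by auto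
    ultimately have dg: "((\<lambda>t. fh t (S t)) has_real_derivative (Dt + u * Sd)) (at t)"
      by (simp add: has_field_derivative_def)
    have un: "0 \<le> u" using uh_nonneg tp u_def by simp
    have "u * pw u (\<alpha> - 1) = u powr \<alpha>" using v_yp[OF un] unfolding yp_def .
    then have gd: "Dt + u * Sd = u powr \<alpha> * (MM - fh t (S t))"
      unfolding Dt_def Sd_def by (simp add: algebra_simps)
    have "(e has_real_derivative (2 * (fh t (S t) - MM) * (Dt + u * Sd))) (at t)"
      unfolding e_def by (rule derivative_eq_intros dg refl | simp)+
    moreover have "2 * (fh t (S t) - MM) * (Dt + u * Sd) = - 2 * u powr \<alpha> * (fh t (S t) - MM)^2"
      unfolding gd by (simp add: power2_eq_square algebra_simps)
    moreover have "- 2 * u powr \<alpha> * (fh t (S t) - MM)^2 \<le> 0" by simp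
    ultimately show "\<exists>l. (e has_real_derivative l) (at t) \<and> l \<le> 0" by metis
  qed
  moreover have "e 0 = 0" unfolding e_def using fh_t0[of S0] hS0 S_init by simp
  ultimately have "e t = 0" unfolding e_def by (smt (verit) zero_le_power2)
  then show ?thesis unfolding e_def by simp
qed

end



context mprob begin

lemma cc_alt: assumes v: "0 < v" and t: "0 \<le> t"
  shows "(v powr (- \<alpha>) + \<alpha> * t) powr (- 1 / \<alpha>) = cc t v"
proof -
  have inv: "v powr (- \<alpha>) * v powr \<alpha> = 1" using v by (simp add: powr_minus)
  have "v powr (- \<alpha>) + \<alpha> * t = v powr (- \<alpha>) * (1 + \<alpha> * t * v powr \<alpha>)"
    using inv by (simp add: algebra_simps)
  then have "(v powr (- \<alpha>) + \<alpha> * t) powr (- 1 / \<alpha>) = (v powr (- \<alpha>)) powr (- 1 / \<alpha>) * (1 + \<alpha> * t * v powr \<alpha>) powr (- 1 / \<alpha>)"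
    by (simp add: powr_mult)
  also have "(v powr (- \<alpha>)) powr (- 1 / \<alpha>) = v powr (- \<alpha> * (- 1 / \<alpha>))" by (rule powr_powr)
  also have "- \<alpha> * (- 1 / \<alpha>) = 1" using a_pos by simp
  finally show ?thesis unfolding cc_def using v by simp
qed

end

lemma mp_S_ge:
  fixes S :: "real \<Rightarrow> real" and D :: "real \<Rightarrow> real"
  assumes ode: "\<forall>t\<ge>0. (S has_real_derivative D t) (at t within {0..})"
    and Dn: "\<And>t. 0 \<le> t \<Longrightarrow> D t \<ge> 0" and t: "0 \<le> t"
  shows "S 0 \<le> S t"
proof -
  have cS: "continuous_on {0..} S"
  proof -
    have "continuous (at t within {0..}) S" if "t \<in> {0..}" for t
    proof -
      have "0 \<le> t" using that by simp
      then have "(S has_real_derivative D t) (at t within {0..})" using ode by blast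
      then show ?thesis by (rule DERIV_continuous)
    qed
    then show ?thesis using continuous_on_eq_continuous_within by blast
  qed
  have "(\<lambda>t. - S t) t \<le> (\<lambda>t. - S t) 0"
  proof (rule nonincr_from_deriv[OF _ _ t])
    show "continuous_on {0..} (\<lambda>t. - S t)" using cS by (intro continuous_intros)
    fix t :: real assume tp: "0 < t"
    have "at t within {0..} = at t" by (rule at_within_interior) (use tp in auto)
    then have "(S has_real_derivative D t) (at t)" using ode tp by (metis less_imp_le)
    then have "((\<lambda>t. - S t) has_real_derivative - D t) (at t)" by (intro derivative_intros)
    moreover have "- D t \<le> 0" using Dn tp by simp
    ultimately show "\<exists>l. ((\<lambda>t. - S t) has_real_derivative l) (at t) \<and> l \<le> 0" by blast
  qed
  then show ?thesis by simp
qed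

theorem mainTheorem6:
  fixes \<alpha> S0 :: real and ut0 :: "real \<Rightarrow> real" and S :: "real \<Rightarrow> real"
  assumes h\<alpha>: "\<alpha> \<ge> 1"
    and hS0: "S0 > 0"
    and hcont: "continuous_on {0..S0} ut0"
    and hmono: "mono_on {0..S0} ut0"
    and hnonneg: "\<forall>\<rho>\<in>{0..S0}. ut0 \<rho> \<ge> 0"
    and hpos: "ut0 S0 > 0"
  defines "u0 \<equiv> (\<lambda>\<rho>. if \<rho> < S0 then ut0 \<rho> else 0)"
  defines "m0 \<equiv> (\<lambda>\<rho>. integral {0..\<rho>} u0)"
  defines "M \<equiv> m0 S0"
  defines "P \<equiv> (\<lambda>t \<rho>0. \<rho>0 + \<alpha> * m0 \<rho>0 * pw (ut0 \<rho>0) (\<alpha> - 1) * t)"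
  defines "Sbar \<equiv> (\<lambda>t. S0 + \<alpha> * M * pw (ut0 S0) (\<alpha> - 1) * t)"
  defines "ut \<equiv> (\<lambda>t \<rho>. if \<rho> \<le> Sbar t \<and> ut0 (the_inv_into {0..S0} (P t) \<rho>) > 0
                 then (ut0 (the_inv_into {0..S0} (P t) \<rho>) powr (- \<alpha>) + \<alpha> * t) powr (- 1 / \<alpha>)
                 else 0)"
  assumes hSinit: "S 0 = S0"
    and hSode: "\<forall>t\<ge>0. (S has_real_derivative (M * pw (ut t (S t)) (\<alpha> - 1))) (at t within {0..})"
  defines "u \<equiv> (\<lambda>t \<rho>. if \<rho> < S t then ut t \<rho> else 0)"
  defines "m \<equiv> (\<lambda>(t, \<rho>). integral {0..\<rho>} (u t))"
  shows "(\<forall>t\<ge>0. S t \<le> Sbar t) \<and> visc_sol \<alpha> m0 m"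
proof -
  interpret mprob \<alpha> S0 ut0 by unfold_locales (use assms in auto)
  have B1: "m0 \<rho> = mm (min \<rho> S0)" if r: "0 \<le> \<rho>" for \<rho>
  proof -
    have "m0 \<rho> = integral {0..\<rho>} (\<lambda>\<sigma>. if \<sigma> \<in> {0..S0} then w \<sigma> else 0)"
      unfolding m0_def
    proof (rule integral_spike[of "{S0}"])
      show "negligible {S0}" by simp
      fix x assume x: "x \<in> {0..\<rho>} - {S0}"
      show "(if x \<in> {0..S0} then w x else 0) = u0 x"
      proof (cases "x < S0")
        case True then show ?thesis using x w_eq[of x] u0_def by simp
      next
        case False then show ?thesis using x u0_def by auto
      qed
    qed
    also have "\<dots> = integral ({0..S0} \<inter> {0..\<rho>}) w" by (rule Henstock_Kurzweil_Integration.integral_restrict_Int)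
    also have "{0..S0} \<inter> {0..\<rho>} = {0..min \<rho> S0}" by auto
    finally show ?thesis unfolding mm_def .
  qed
  have B2: "M = mm S0" unfolding M_def using B1[of S0] hS0 by simp
  have Mnn: "M \<ge> 0" using B2 mm_nonneg hS0 by simp
  have Sbar_eq: "Sbar t = PP t S0" for t
    unfolding Sbar_def PP_def B2 using w_eq[of S0] hS0 by (simp add: yp_def algebra_simps)
  have B3: "ut t \<rho> = ub t \<rho>" if t: "0 \<le> t" and r: "0 \<le> \<rho>" for t \<rho>
  proof (cases "\<rho> \<le> PP t S0")
    case False
    then show ?thesis unfolding ut_def ub_def Sbar_eq by simp
  next
    case True
    define q where "q = QQ t \<rho>"
    have q0: "0 \<le> q" using QQ_props(2)[OF t r] q_def by simp
    have "QQ t \<rho> \<le> QQ t (PP t S0)" using QQ_mono[OF t r True] .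
    then have qS: "q \<le> S0" using QQ_PP[OF t] hS0 q_def by simp
    have Pq: "PP t q = \<rho>" using QQ_props(1)[OF t r] q_def by simp
    have Peq: "P t x = PP t x" if "x \<in> {0..S0}" for x
      using that B1[of x] w_eq[of x] unfolding P_def PP_def yp_def by (simp add: algebra_simps)
    have injP: "inj_on (P t) {0..S0}"
    proof -
      have "inj_on (PP t) {0..S0}" using inj_on_subset[OF PP_inj[OF t]] by auto
      then show ?thesis using inj_on_cong[of "{0..S0}" "P t" "PP t"] Peq by blast
    qed
    have inv: "the_inv_into {0..S0} (P t) \<rho> = q"
      by (rule the_inv_into_f_eq[OF injP]) (use Peq[of q] q0 qS Pq in auto)
    have wq: "ut0 q = w q" using w_eq[OF q0 qS] by simp
    show ?thesis
    proof (cases "w q > 0")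
      case True
      then show ?thesis unfolding ut_def ub_def inv wq Sbar_eq uh_def q_def[symmetric]
        using True cc_alt[OF True t] by simp
    next
      case False
      then have "w q = 0" using w_nonneg[of q] by simp
      then show ?thesis unfolding ut_def ub_def inv wq Sbar_eq uh_def q_def[symmetric]
        by (simp add: cc_zero)
    qed
  qed
  have Sge: "S0 \<le> S t" if t: "0 \<le> t" for t
    using mp_S_ge[OF hSode _ t] Mnn pw_nonneg hSinit by simp
  have ode': "\<forall>t\<ge>0. (S has_real_derivative (mm S0 * pw (ub t (S t)) (\<alpha> - 1))) (at t within {0..})"
  proof (intro allI impI)
    fix t :: real assume t: "0 \<le> t"
    have e: "ut t (S t) = ub t (S t)" using B3[OF t] Sge[OF t] hS0 by simp
    have "(S has_real_derivative (M * pw (ut t (S t)) (\<alpha> - 1))) (at t within {0..})"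
      using hSode t by blast
    then show "(S has_real_derivative (mm S0 * pw (ub t (S t)) (\<alpha> - 1))) (at t within {0..})"
      unfolding e B2 .
  qed
  interpret mprobS \<alpha> S0 ut0 S by unfold_locales (use hSinit ode' in auto)
  have part1: "\<forall>t\<ge>0. S t \<le> Sbar t" using S_le Sbar_eq by simp
  have B5: "m (t,\<rho>) = min (fh t \<rho>) M" if t: "0 \<le> t" and r: "0 \<le> \<rho>" for t \<rho>
  proof -
    have "m (t,\<rho>) = integral {0..\<rho>} (\<lambda>\<sigma>. if \<sigma> \<in> {0..S t} then uh t \<sigma> else 0)"
      unfolding m_def case_prod_conv
    proof (rule integral_spike[of "{S t}"])
      show "negligible {S t}" by simp
      fix x assume x: "x \<in> {0..\<rho>} - {S t}"
      show "(if x \<in> {0..S t} then uh t x else 0) = u t x"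
      proof (cases "x < S t")
        case True
        have "ut t x = ub t x" using B3[OF t] x by simp
        also have "\<dots> = uh t x" unfolding ub_def using True S_le[OF t] by simp
        finally show ?thesis using True x u_def by simp
      next
        case False then show ?thesis using x u_def by auto
      qed
    qed
    also have "\<dots> = integral ({0..S t} \<inter> {0..\<rho>}) (uh t)" by (rule Henstock_Kurzweil_Integration.integral_restrict_Int)
    also have "{0..S t} \<inter> {0..\<rho>} = {0..min \<rho> (S t)}" by auto
    finally have "m (t,\<rho>) = fh t (min \<rho> (S t))" unfolding fh_def .
    moreover have "fh t (min \<rho> (S t)) = min (fh t \<rho>) M"
    proof (cases "\<rho> \<le> S t")
      case True
      then have "fh t \<rho> \<le> fh t (S t)" using fh_mono[OF t r] by simp
      then show ?thesis using True mass[OF t] B2 by simp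
    next
      case False
      then have "fh t (S t) \<le> fh t \<rho>" using fh_mono[OF t] S_pos[OF t] by simp
      then show ?thesis using False mass[OF t] B2 by simp
    qed
    ultimately show ?thesis by simp
  qed
  have cont: "continuous_on DD m"
  proof -
    have "continuous_on DD (\<lambda>x. min ((\<lambda>(t,\<rho>). fh t \<rho>) x) M)"
      by (intro continuous_intros fh_cont)
    then show ?thesis by (rule continuous_on_eq) (auto simp: B5)
  qed
  have init: "m (0, \<rho>) = m0 \<rho>" if r: "0 \<le> \<rho>" for \<rho>
  proof -
    have "m (0,\<rho>) = min (mm \<rho>) M" using B5[of 0 \<rho>] r fh_t0[OF r] by simp
    also have "\<dots> = mm (min \<rho> S0)" using mm_mono[OF r, of S0] mm_mono[of S0 \<rho>] hS0 B2
      by (cases "\<rho> \<le> S0") (auto simp: min_def)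
    finally show ?thesis using B1[OF r] by simp
  qed
  have bnd: "m (t, 0) = 0" for t unfolding m_def by simp
  have interior: "(\<forall>p\<in>frechet_superdiff m (t,\<rho>). fst p + (max (snd p) 0) powr \<alpha> * m (t,\<rho>) \<le> 0) \<and>
      (\<forall>p\<in>frechet_subdiff m (t,\<rho>). fst p + (max (snd p) 0) powr \<alpha> * m (t,\<rho>) \<ge> 0)"
    if t: "0 < t" and r: "0 < \<rho>" for t \<rho>
  proof (rule visc_point[where f = "\<lambda>x. fh (fst x) (snd x)" and r = "min t \<rho>" and Mc = M])
    show "((\<lambda>x. fh (fst x) (snd x)) has_derivative
        (\<lambda>h. (- (uh t \<rho> powr \<alpha>) * fh t \<rho>) * fst h + uh t \<rho> * snd h)) (at (t, \<rho>))"
      by (rule fh_frechet[OF t r])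
    show "0 < min t \<rho>" using t r by simp
    fix y :: "real \<times> real" assume y: "dist y (t, \<rho>) < min t \<rho>"
    have "\<bar>fst y - t\<bar> < t" "\<bar>snd y - \<rho>\<bar> < \<rho>"
      using dist_fst_le[of y "(t,\<rho>)"] dist_snd_le[of y "(t,\<rho>)"] y by (auto simp: dist_real_def)
    then have "0 \<le> fst y" "0 \<le> snd y" by linarith+
    then show "m y = min (fh (fst y) (snd y)) M" using B5[of "fst y" "snd y"] by simp
  qed (use uh_nonneg t Mnn h\<alpha> in auto)
  have "visc_sol \<alpha> m0 m"
    unfolding visc_sol_def visc_subsol_def visc_supersol_def
    using cont interior init bnd by auto
  then show ?thesis using part1 by simp
qed


end
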